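(* The double star $S(2,2)$ is the unique smallest $\operatorname{IR}$-tree of diameter $3$: $S(2,2)$ is an $\operatorname{IR}$-graph, every tree of diameter $3$ that is an $\operatorname{IR}$-graph has at least $6$ vertices, and every such tree with exactly $6$ vertices is isomorphic to $S(2,2)$.
   Context: All graphs are finite and simple. For $G=(V,E)$, $D\subseteq V$, $v\in D$: $\operatorname{PN}(v,D)=N[v]-N[D-\{v\}]$ (closed neighbourhoods). $D$ is irredundant if $\operatorname{PN}(v,D)\neq\varnothing$ for all $v\in D$; $\operatorname{IR}(G)$ is the maximum size of an irredundant set; an $\operatorname{IR}(G)$-set is an irredundant set of that size. $G(\operatorname{IR})$ has the $\operatorname{IR}(G)$-sets as vertices, with $D\sim D'$ iff there exist $u\in D$, $v\in D'$ with $uv\in E(G)$ and $D'=(D-\{u\})\cup\{v\}$. A graph $H$ is an $\operatorname{IR}$-graph if $H\cong G(\operatorname{IR})$ for some graph $G$; an $\operatorname{IR}$-tree is a tree that is an $\operatorname{IR}$-graph. The double star $S(2,2)$ is the tree obtained by joining the centres of two copies of $K_{1,2}$ by an edge. *)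

theory Defs
  imports Main
begin

definition graph :: "'a set \<Rightarrow> 'a set set \<Rightarrow> bool" where
  "graph V E \<longleftrightarrow> finite V \<and> (\<forall>e\<in>E. e \<subseteq> V \<and> card e = 2)"

definition cnbhd :: "'a set set \<Rightarrow> 'a \<Rightarrow> 'a set" where
  "cnbhd E v = insert v {u. {u, v} \<in> E}"

definition cnbhd_set :: "'a set set \<Rightarrow> 'a set \<Rightarrow> 'a set" where
  "cnbhd_set E S = (\<Union>v\<in>S. cnbhd E v)"

definition PN :: "'a set set \<Rightarrow> 'a \<Rightarrow> 'a set \<Rightarrow> 'a set" where
  "PN E v D = cnbhd E v - cnbhd_set E (D - {v})"

definition irredundant :: "'a set \<Rightarrow> 'a set set \<Rightarrow> 'a set \<Rightarrow> bool" where
  "irredundant V E D \<longleftrightarrow> D \<subseteq> V \<and> (\<forall>v\<in>D. PN E v D \<noteq> {})"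

definition IR :: "'a set \<Rightarrow> 'a set set \<Rightarrow> nat" where
  "IR V E = Max {card D | D. irredundant V E D}"

definition IR_sets :: "'a set \<Rightarrow> 'a set set \<Rightarrow> 'a set set" where
  "IR_sets V E = {D. irredundant V E D \<and> card D = IR V E}"

definition IR_edges :: "'a set \<Rightarrow> 'a set set \<Rightarrow> 'a set set set" where
  "IR_edges V E = {{D, D'} | D D'. D \<in> IR_sets V E \<and> D' \<in> IR_sets V E \<and>
      (\<exists>u\<in>D. \<exists>v\<in>D'. {u, v} \<in> E \<and> D' = (D - {u}) \<union> {v})}"

definition graph_iso :: "'a set \<Rightarrow> 'a set set \<Rightarrow> 'b set \<Rightarrow> 'b set set \<Rightarrow> bool" where
  "graph_iso V E V' E' \<longleftrightarrow> (\<exists>f. bij_betw f V V' \<and>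
      (\<forall>u\<in>V. \<forall>v\<in>V. {u, v} \<in> E \<longleftrightarrow> {f u, f v} \<in> E'))"

(* Every finite graph is isomorphic to one with natural-number vertices, so
   quantifying over graphs on nat loses no generality. *)
definition is_IR_graph :: "'a set \<Rightarrow> 'a set set \<Rightarrow> bool" where
  "is_IR_graph V E \<longleftrightarrow> (\<exists>(W::nat set) F. graph W F \<and> graph_iso V E (IR_sets W F) (IR_edges W F))"

definition walk :: "'a set \<Rightarrow> 'a set set \<Rightarrow> 'a list \<Rightarrow> bool" where
  "walk V E xs \<longleftrightarrow> xs \<noteq> [] \<and> set xs \<subseteq> V \<and> (\<forall>i. Suc i < length xs \<longrightarrow> {xs ! i, xs ! Suc i} \<in> E)"

definition connected :: "'a set \<Rightarrow> 'a set set \<Rightarrow> bool" where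
  "connected V E \<longleftrightarrow> V \<noteq> {} \<and>
     (\<forall>u\<in>V. \<forall>v\<in>V. \<exists>xs. walk V E xs \<and> hd xs = u \<and> last xs = v)"

definition is_cycle :: "'a set \<Rightarrow> 'a set set \<Rightarrow> 'a list \<Rightarrow> bool" where
  "is_cycle V E xs \<longleftrightarrow> walk V E xs \<and> distinct xs \<and> length xs \<ge> 3 \<and> {last xs, hd xs} \<in> E"

definition acyclic_graph :: "'a set \<Rightarrow> 'a set set \<Rightarrow> bool" where
  "acyclic_graph V E \<longleftrightarrow> \<not> (\<exists>xs. is_cycle V E xs)"

definition tree :: "'a set \<Rightarrow> 'a set set \<Rightarrow> bool" where
  "tree V E \<longleftrightarrow> graph V E \<and> connected V E \<and> acyclic_graph V E"

definition gdist :: "'a set \<Rightarrow> 'a set set \<Rightarrow> 'a \<Rightarrow> 'a \<Rightarrow> nat" where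
  "gdist V E u v = (LEAST n. \<exists>xs. walk V E xs \<and> hd xs = u \<and> last xs = v \<and> length xs = Suc n)"

definition diameter :: "'a set \<Rightarrow> 'a set set \<Rightarrow> nat" where
  "diameter V E = Max {gdist V E u v | u v. u \<in> V \<and> v \<in> V}"

definition S22_V :: "nat set" where
  "S22_V = {0, 1, 2, 3, 4, 5}"

definition S22_E :: "nat set set" where
  "S22_E = {{0, 1}, {0, 2}, {0, 3}, {1, 4}, {1, 5}}"

end

theory Submission
  imports Defs
begin

lemma card_swap: "finite X \<Longrightarrow> u \<in> X \<Longrightarrow> v \<notin> X \<Longrightarrow> card (insert v (X - {u})) = card X"
proof -
  assume f: "finite X" and u: "u \<in> X" and v: "v \<notin> X"
  have "card (insert v (X - {u})) = Suc (card (X - {u}))" using f v by simp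
  also have "\<dots> = Suc (card X - 1)" using f u by simp
  also have "\<dots> = card X"
  proof -
    have "card X > 0" using f u card_gt_0_iff by blast
    then show ?thesis by simp
  qed
  finally show ?thesis .
qed

lemma card_diff_tri: "finite X \<Longrightarrow> finite Y \<Longrightarrow> card (X - Z) \<le> card (X - Y) + card (Y - Z)"
proof -
  assume f: "finite X" "finite Y"
  have "X - Z \<subseteq> (X - Y) \<union> (Y - Z)" by blast
  then have "card (X - Z) \<le> card ((X - Y) \<union> (Y - Z))" using f by (intro card_mono) auto
  also have "\<dots> \<le> card (X - Y) + card (Y - Z)" by (rule card_Un_le)
  finally show ?thesis .
qed

lemma card3: "finite S \<Longrightarrow> a \<in> S \<Longrightarrow> b \<in> S \<Longrightarrow> c \<in> S \<Longrightarrow> a \<noteq> b \<Longrightarrow> a \<noteq> c \<Longrightarrow> b \<noteq> c \<Longrightarrow> card S \<ge> 3"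
proof -
  assume "finite S" "a \<in> S" "b \<in> S" "c \<in> S" "a \<noteq> b" "a \<noteq> c" "b \<noteq> c"
  then have "card {a,b,c} \<le> card S" by (intro card_mono) auto
  then show ?thesis using \<open>a \<noteq> b\<close> \<open>a \<noteq> c\<close> \<open>b \<noteq> c\<close> by simp
qed

lemma card2: "finite S \<Longrightarrow> a \<in> S \<Longrightarrow> b \<in> S \<Longrightarrow> a \<noteq> b \<Longrightarrow> card S \<ge> 2"
proof -
  assume "finite S" "a \<in> S" "b \<in> S" "a \<noteq> b"
  then have "card {a,b} \<le> card S" by (intro card_mono) auto
  then show ?thesis using \<open>a \<noteq> b\<close> by simp
qed

lemma fin_cards: "finite W \<Longrightarrow> finite {card D |D. irredundant W F D}"
proof -
  assume fw: "finite W"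
  have "{card D |D. irredundant W F D} \<subseteq> {..card W}"
  proof
    fix k assume "k \<in> {card D |D. irredundant W F D}"
    then obtain D where k: "k = card D" and D: "irredundant W F D" by blast
    from D have "D \<subseteq> W" by (simp add: irredundant_def)
    then have "card D \<le> card W" using fw by (rule card_mono[rotated])
    then show "k \<in> {..card W}" using k by simp
  qed
  then show ?thesis using finite_subset by blast
qed

locale irg =
  fixes W :: "'v set" and F :: "'v set set"
  assumes gr: "graph W F"
begin

definition adj :: "'v \<Rightarrow> 'v \<Rightarrow> bool" where "adj u v \<longleftrightarrow> {u,v} \<in> F"
definition nbr :: "'v \<Rightarrow> 'v \<Rightarrow> bool" where "nbr w v \<longleftrightarrow> w = v \<or> adj w v"
definition pn :: "'v \<Rightarrow> 'v \<Rightarrow> 'v set \<Rightarrow> bool" where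
  "pn w v D \<longleftrightarrow> nbr w v \<and> (\<forall>t\<in>D. t \<noteq> v \<longrightarrow> \<not> nbr w t)"
definition indep :: "'v set \<Rightarrow> bool" where "indep D \<longleftrightarrow> (\<forall>s\<in>D. \<forall>t\<in>D. \<not> adj s t)"
definition sw :: "'v set \<Rightarrow> 'v set \<Rightarrow> bool" where
  "sw X Y \<longleftrightarrow> (\<exists>u\<in>X. \<exists>v. v \<notin> X \<and> adj u v \<and> Y = insert v (X - {u}))"

abbreviation "n \<equiv> IR W F"
abbreviation "IRS \<equiv> IR_sets W F"

lemma finW: "finite W" using gr by (simp add: graph_def)

lemma adj_sym: "adj u v \<Longrightarrow> adj v u" by (simp add: adj_def insert_commute)
lemma adj_ne: "adj u v \<Longrightarrow> u \<noteq> v"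
proof
  assume "adj u v" "u = v"
  then have "{u} \<in> F" by (simp add: adj_def)
  then have "card {u} = 2" using gr unfolding graph_def by blast
  then show False by simp
qed
lemma adj_W: "adj u v \<Longrightarrow> u \<in> W \<and> v \<in> W" using gr unfolding adj_def graph_def by blast
lemma nbr_sym: "nbr u v \<longleftrightarrow> nbr v u" unfolding nbr_def using adj_sym by blast

lemma mem_cnbhd: "x \<in> cnbhd F v \<longleftrightarrow> nbr x v"
  by (auto simp: cnbhd_def nbr_def adj_def)

lemma irr_iff: "irredundant W F D \<longleftrightarrow> D \<subseteq> W \<and> (\<forall>v\<in>D. \<exists>w. pn w v D)"
proof -
  have "PN F v D \<noteq> {} \<longleftrightarrow> (\<exists>w. pn w v D)" for v
    unfolding PN_def cnbhd_set_def pn_def by (auto simp: mem_cnbhd subset_iff)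
  then show ?thesis unfolding irredundant_def by blast
qed

lemma irr_le: "irredundant W F D \<Longrightarrow> card D \<le> n"
  unfolding IR_def by (rule Max_ge[OF fin_cards[OF finW]]) blast

lemma IRS_irr: "D \<in> IRS \<Longrightarrow> irredundant W F D" by (simp add: IR_sets_def)
lemma IRS_card: "D \<in> IRS \<Longrightarrow> card D = n" by (simp add: IR_sets_def)
lemma IRS_sub: "D \<in> IRS \<Longrightarrow> D \<subseteq> W" by (simp add: IR_sets_def irredundant_def)
lemma IRS_fin: "D \<in> IRS \<Longrightarrow> finite D" using IRS_sub finW finite_subset by blast
lemma IRS_pn: "D \<in> IRS \<Longrightarrow> v \<in> D \<Longrightarrow> \<exists>w. pn w v D" using IRS_irr irr_iff by blast

lemma IRS_intro: "D \<subseteq> W \<Longrightarrow> card D = n \<Longrightarrow> (\<forall>v\<in>D. \<exists>w. pn w v D) \<Longrightarrow> D \<in> IRS"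
  by (simp add: IR_sets_def irr_iff)

lemma indep_irr: "D \<subseteq> W \<Longrightarrow> indep D \<Longrightarrow> irredundant W F D"
proof -
  assume D: "D \<subseteq> W" and i: "indep D"
  have "pn v v D" if "v \<in> D" for v
    unfolding pn_def nbr_def using i that unfolding indep_def by blast
  then show ?thesis unfolding irr_iff using D by blast
qed

lemma indep_IRS: "D \<subseteq> W \<Longrightarrow> card D = n \<Longrightarrow> indep D \<Longrightarrow> D \<in> IRS"
  using indep_irr by (simp add: IR_sets_def)

lemma indep_le: "D \<subseteq> W \<Longrightarrow> indep D \<Longrightarrow> card D \<le> n"
  using indep_irr irr_le by blast


lemma sw_intro: "u \<in> X \<Longrightarrow> v \<notin> X \<Longrightarrow> adj u v \<Longrightarrow> sw X (insert v (X - {u}))"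
  unfolding sw_def by blast

lemma sw_elim: "sw X Y \<Longrightarrow> (\<And>u v. u \<in> X \<Longrightarrow> v \<notin> X \<Longrightarrow> adj u v \<Longrightarrow> Y = insert v (X - {u}) \<Longrightarrow> P) \<Longrightarrow> P"
  unfolding sw_def by blast

lemma sw_sym: "sw X Y \<Longrightarrow> sw Y X"
proof -
  assume "sw X Y"
  then obtain u v where u: "u \<in> X" and v: "v \<notin> X" and a: "adj u v" and Y: "Y = insert v (X - {u})"
    by (rule sw_elim)
  have ne: "u \<noteq> v" using adj_ne a by blast
  have X: "X = insert u (Y - {v})" using Y u v ne by auto
  have uY: "u \<notin> Y" using Y ne by simp
  have vY: "v \<in> Y" using Y by simp
  show "sw Y X" unfolding X by (rule sw_intro[OF vY uY adj_sym[OF a]])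
qed

lemma sw_diff: "sw X Y \<Longrightarrow> card (X - Y) = 1"
proof -
  assume "sw X Y"
  then obtain u v where u: "u \<in> X" and v: "v \<notin> X" and a: "adj u v" and Y: "Y = insert v (X - {u})"
    by (rule sw_elim)
  have "X - Y = {u}" using u v Y adj_ne[OF a] by auto
  then show ?thesis by simp
qed
end

definition W0 :: "nat set" where "W0 = {2,3,4,5,6,7}"
definition F0 :: "nat set set" where "F0 = {{2,5},{2,6},{2,7},{3,4},{3,6},{3,7},{4,5}}"

lemma cn0: "cnbhd F0 2 = {2,5,6,7}" "cnbhd F0 3 = {3,4,6,7}" "cnbhd F0 4 = {3,4,5}"
  "cnbhd F0 5 = {2,4,5}" "cnbhd F0 6 = {2,3,6}" "cnbhd F0 7 = {2,3,7}"
  by (auto simp: cnbhd_def F0_def doubleton_eq_iff)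

definition SIX :: "nat set set" where "SIX = {{3,4,6},{2,5,6},{3,4,7},{2,5,7},{4,6,7},{5,6,7}}"

lemma six_irr: "\<forall>D\<in>SIX. irredundant W0 F0 D \<and> card D = 3"
  unfolding SIX_def W0_def
  by (simp add: irredundant_def PN_def cnbhd_set_def cn0 insert_Diff_if)

lemma IR_edges_iff: "{X,Y} \<in> IR_edges W F \<longleftrightarrow> X \<in> IR_sets W F \<and> Y \<in> IR_sets W F \<and>
   ((\<exists>u\<in>X. \<exists>v\<in>Y. {u, v} \<in> F \<and> Y = (X - {u}) \<union> {v}) \<or> (\<exists>u\<in>Y. \<exists>v\<in>X. {u, v} \<in> F \<and> X = (Y - {u}) \<union> {v}))"
  unfolding IR_edges_def by (auto simp: doubleton_eq_iff)

lemma graph0: "graph W0 F0"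
  unfolding graph_def W0_def F0_def by auto

lemma allsub: "\<forall>D\<in>Pow W0. irredundant W0 F0 D \<longrightarrow> card D \<le> 3 \<and> (card D = 3 \<longrightarrow> D \<in> SIX)"
  unfolding W0_def Pow_insert Pow_empty SIX_def
  apply (simp only: image_insert image_empty Un_insert_left Un_empty_left insert_absorb2 ball_simps)
  apply (simp add: irredundant_def PN_def cnbhd_set_def cn0 insert_Diff_if)
  done

lemma irr_sub: "irredundant W F D \<Longrightarrow> D \<in> Pow W"
  by (simp add: irredundant_def)


lemma IR0: "IR W0 F0 = 3"
proof -
  have fin: "finite {card D |D. irredundant W0 F0 D}"
    by (rule fin_cards) (simp add: W0_def)
  have le: "k \<le> 3" if kk: "k \<in> {card D |D. irredundant W0 F0 D}" for k
  proof -
    obtain D where "k = card D" "irredundant W0 F0 D" using kk by blast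
    then show ?thesis using allsub irr_sub by blast
  qed
  have "{3,4,6} \<in> SIX" unfolding SIX_def by (rule insertI1)
  then have "irredundant W0 F0 {3,4,6} \<and> card {3,4,6::nat} = 3"
    using six_irr by blast
  then have mem: "3 \<in> {card D |D. irredundant W0 F0 D}"
    by (metis (mono_tags, lifting) mem_Collect_eq)
  show ?thesis unfolding IR_def
    using Max_eqI[OF fin le mem] by simp
qed

lemma IRS0: "IR_sets W0 F0 = SIX"
proof
  show "IR_sets W0 F0 \<subseteq> SIX" unfolding IR_sets_def IR0 using allsub irr_sub by blast
  show "SIX \<subseteq> IR_sets W0 F0" unfolding IR_sets_def IR0 using six_irr by blast
qed

definition f0 :: "nat \<Rightarrow> nat set" where
  "f0 i = (if i = 0 then {4,6,7} else if i = 1 then {5,6,7} else if i = 2 then {3,4,6}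
     else if i = 3 then {3,4,7} else if i = 4 then {2,5,6} else {2,5,7})"

lemma part1: "is_IR_graph S22_V S22_E"
  unfolding is_IR_graph_def
proof (intro exI conjI)
  show "graph W0 F0" by (rule graph0)
  show "graph_iso S22_V S22_E (IR_sets W0 F0) (IR_edges W0 F0)"
    unfolding graph_iso_def
  proof (intro exI conjI)
    show "bij_betw f0 S22_V (IR_sets W0 F0)"
      unfolding IRS0 bij_betw_def inj_on_def S22_V_def SIX_def f0_def
      by (auto simp: set_eq_subset)
    show "\<forall>u\<in>S22_V. \<forall>v\<in>S22_V. ({u, v} \<in> S22_E) = ({f0 u, f0 v} \<in> IR_edges W0 F0)"
      unfolding IR_edges_iff IRS0 
      unfolding S22_V_def S22_E_def SIX_def f0_def
      by (simp add: F0_def insert_Diff_if doubleton_eq_iff set_eq_subset)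
  qed
qed


context irg begin

lemma edge_one: "sw P Q" if P: "P \<in> IRS" and Q: "Q \<in> IRS" and u: "u \<in> P" and v: "v \<in> Q" and e: "{u,v} \<in> F"
     and eq: "Q = (P - {u}) \<union> {v}" for P Q u v
  proof -
    have a: "adj u v" using e by (simp add: adj_def)
    have vP: "v \<notin> P"
    proof
      assume vP: "v \<in> P"
      have uv: "u \<noteq> v" using adj_ne[OF a] .
      then have "Q = P - {u}" using eq vP by auto
      then have "card Q = card P - 1" using u IRS_fin[OF P] by simp
      moreover have "card P > 0" using u IRS_fin[OF P] card_gt_0_iff by blast
      ultimately show False using IRS_card[OF P] IRS_card[OF Q] by simp
    qed
    have "Q = insert v (P - {u})" using eq by simp
    then show ?thesis using sw_intro[OF u vP a] by simp
  qed

lemma edge_ex: "{X,Y} \<in> IR_edges W F \<Longrightarrow> \<exists>D D'. {X,Y} = {D,D'} \<and> D \<in> IRS \<and> D' \<in> IRS \<and> (\<exists>u\<in>D. \<exists>v\<in>D'. {u, v} \<in> F \<and> D' = (D - {u}) \<union> {v})"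
  unfolding IR_edges_def mem_Collect_eq by blast
lemma edge_in: "X \<in> IRS \<Longrightarrow> Y \<in> IRS \<Longrightarrow> (\<exists>u\<in>X. \<exists>v\<in>Y. {u, v} \<in> F \<and> Y = (X - {u}) \<union> {v}) \<Longrightarrow> {X,Y} \<in> IR_edges W F"
  unfolding IR_edges_def mem_Collect_eq by blast
lemma sw_ex: "sw X Y \<Longrightarrow> \<exists>u\<in>X. \<exists>v\<in>Y. {u, v} \<in> F \<and> Y = (X - {u}) \<union> {v}"
proof -
    assume "sw X Y"
    then obtain u v where u: "u \<in> X" and v: "v \<notin> X" and a: "adj u v" and Yd: "Y = insert v (X - {u})"
      by (rule sw_elim)
    have "{u,v} \<in> F" using a by (simp add: adj_def)
    moreover have "v \<in> Y" "Y = (X - {u}) \<union> {v}" using Yd by auto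
    ultimately show ?thesis
      using u by blast
qed

lemma IR_edges_sw: "X \<in> IRS \<Longrightarrow> Y \<in> IRS \<Longrightarrow> {X,Y} \<in> IR_edges W F \<longleftrightarrow> sw X Y"
proof
  assume X: "X \<in> IRS" and Y: "Y \<in> IRS" and "{X,Y} \<in> IR_edges W F"
  then obtain D D' where DD: "{X,Y} = {D,D'}" and D: "D \<in> IRS" and D': "D' \<in> IRS"
      and ex: "\<exists>u\<in>D. \<exists>v\<in>D'. {u, v} \<in> F \<and> D' = (D - {u}) \<union> {v}"
    using edge_ex[OF \<open>{X,Y} \<in> IR_edges W F\<close>] by (elim exE conjE) (rule that)
  from ex obtain u v where "u \<in> D" "v \<in> D'" "{u,v} \<in> F" "D' = (D - {u}) \<union> {v}" by blast
  then have s: "sw D D'" using edge_one[OF D D'] by blast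
  from DD have "(X = D \<and> Y = D') \<or> (X = D' \<and> Y = D)" by (simp add: doubleton_eq_iff)
  then show "sw X Y"
  proof
    assume "X = D \<and> Y = D'" then show ?thesis using s by simp
  next
    assume "X = D' \<and> Y = D" then show ?thesis using sw_sym[OF s] by simp
  qed
next
  assume X: "X \<in> IRS" and Y: "Y \<in> IRS" and "sw X Y"
  then show "{X,Y} \<in> IR_edges W F" using edge_in sw_ex by blast
qed
end

context irg begin
definition pi :: "'v set \<Rightarrow> 'v \<Rightarrow> 'v" where "pi X s = (SOME w. pn w s X)"
definition bx :: "'v set \<Rightarrow> 'v set" where "bx X = pi X ` X"

lemma pi_pn: "X \<in> IRS \<Longrightarrow> s \<in> X \<Longrightarrow> pn (pi X s) s X"
  unfolding pi_def using IRS_pn someI_ex by metis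

lemma pn_W: "pn w v D \<Longrightarrow> v \<in> W \<Longrightarrow> w \<in> W"
  unfolding pn_def nbr_def using adj_W by blast

lemma pn_other: "pn w v D \<Longrightarrow> t \<in> D \<Longrightarrow> t \<noteq> v \<Longrightarrow> w \<noteq> t \<and> \<not> adj w t \<and> \<not> adj t w"
  unfolding pn_def nbr_def using adj_sym by blast

lemma pn_nonisol: "pn w v D \<Longrightarrow> v \<in> D \<Longrightarrow> t \<in> D \<Longrightarrow> adj v t \<Longrightarrow> w \<notin> D \<and> adj w v"
proof -
  assume p: "pn w v D" and v: "v \<in> D" and t: "t \<in> D" and a: "adj v t"
  have tv: "t \<noteq> v" using adj_ne[OF a] by simp
  have wv: "w \<noteq> v" using pn_other[OF p t tv] a by blast
  then have aw: "adj w v" using p unfolding pn_def nbr_def by blast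
  have "w \<notin> D"
  proof
    assume "w \<in> D"
    then show False using pn_other[OF p _ wv] by blast
  qed
  then show ?thesis using aw by blast
qed

lemma pn_sub: "pn w v D \<Longrightarrow> D' \<subseteq> D \<Longrightarrow> pn w v D'"
  unfolding pn_def by blast

lemma bx_facts:
  assumes X: "X \<in> IRS"
  shows "bx X \<in> IRS" and "\<And>s. s \<in> X \<Longrightarrow> pn s (pi X s) (bx X)"
proof -
  have inj: "inj_on (pi X) X"
  proof (rule inj_onI)
    fix s t assume s: "s \<in> X" and t: "t \<in> X" and eq: "pi X s = pi X t"
    show "s = t"
    proof (rule ccontr)
      assume ne: "s \<noteq> t"
      have "\<not> nbr (pi X s) t" using pi_pn[OF X s] t ne unfolding pn_def by auto
      moreover have "nbr (pi X t) t" using pi_pn[OF X t] unfolding pn_def by blast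
      ultimately show False using eq by simp
    qed
  qed
  have pns: "pn s (pi X s) (bx X)" if s: "s \<in> X" for s
  proof -
    have "nbr s (pi X s)" using pi_pn[OF X s] nbr_sym unfolding pn_def by blast
    moreover have "\<not> nbr s q" if q: "q \<in> bx X" and qne: "q \<noteq> pi X s" for q
    proof -
      obtain t where t: "t \<in> X" and qt: "q = pi X t" using q unfolding bx_def by blast
      have "t \<noteq> s" using qt qne by blast
      then have "\<not> nbr (pi X t) s" using pi_pn[OF X t] s unfolding pn_def by auto
      then show ?thesis using qt nbr_sym by blast
    qed
    ultimately show ?thesis unfolding pn_def by blast
  qed
  then show "\<And>s. s \<in> X \<Longrightarrow> pn s (pi X s) (bx X)" .
  have sub: "bx X \<subseteq> W"
  proof
    fix q assume "q \<in> bx X"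
    then obtain t where t: "t \<in> X" and qt: "q = pi X t" unfolding bx_def by blast
    have "t \<in> W" using IRS_sub[OF X] t by blast
    then show "q \<in> W" using pn_W[OF pi_pn[OF X t]] qt by blast
  qed
  have card: "card (bx X) = n" unfolding bx_def using card_image[OF inj] IRS_card[OF X] by simp
  have "\<forall>q\<in>bx X. \<exists>w. pn w q (bx X)"
  proof
    fix q assume "q \<in> bx X"
    then obtain t where t: "t \<in> X" and qt: "q = pi X t" unfolding bx_def by blast
    show "\<exists>w. pn w q (bx X)" using pns[OF t] qt by blast
  qed
  then show "bx X \<in> IRS" using IRS_intro[OF sub card] by blast
qed

lemma pi_in_bx: "s \<in> X \<Longrightarrow> pi X s \<in> bx X" unfolding bx_def by blast

lemma bx_out: "X \<in> IRS \<Longrightarrow> s \<in> X \<Longrightarrow> t \<in> X \<Longrightarrow> adj s t \<Longrightarrow> s \<notin> bx X"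
proof
  assume X: "X \<in> IRS" and s: "s \<in> X" and t: "t \<in> X" and a: "adj s t" and sb: "s \<in> bx X"
  obtain s' where s': "s' \<in> X" and eq: "s = pi X s'" using sb unfolding bx_def by blast
  have p: "pn s s' X" using pi_pn[OF X s'] eq by simp
  show False
  proof (cases "s' = s")
    case True
    then have "pn s s X" using p by simp
    then show False using pn_nonisol[OF _ s t a] s by blast
  next
    case False
    then show False using pn_other[OF p s] by blast
  qed
qed

lemma pi_out: "X \<in> IRS \<Longrightarrow> s \<in> X \<Longrightarrow> t \<in> X \<Longrightarrow> adj s t \<Longrightarrow> pi X s \<notin> X \<and> adj (pi X s) s"
  using pn_nonisol[OF pi_pn] by blast

lemma leafI:
  assumes C: "C \<in> IRS" and i: "indep C" and z: "z \<in> C" and y: "y \<notin> C" and p: "pn y z C"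
  shows "insert y (C - {z}) \<in> IRS" and "sw C (insert y (C - {z}))"
proof -
  have yz: "y \<noteq> z" using z y by blast
  then have a: "adj y z" using p unfolding pn_def nbr_def by blast
  have sub: "insert y (C - {z}) \<subseteq> W" using IRS_sub[OF C] adj_W[OF a] by blast
  have card: "card (insert y (C - {z})) = n" using card_swap[OF IRS_fin[OF C] z y] IRS_card[OF C] by simp
  have "indep (insert y (C - {z}))"
    unfolding indep_def
  proof (intro ballI)
    fix s t assume s: "s \<in> insert y (C - {z})" and t: "t \<in> insert y (C - {z})"
    show "\<not> adj s t"
    proof (cases "s = y")
      case True
      then show ?thesis
        using t pn_other[OF p] adj_ne by (cases "t = y") auto
    next
      case False
      then have sC: "s \<in> C" "s \<noteq> z" using s by auto
      show ?thesis
      proof (cases "t = y")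
        case True
        then show ?thesis using pn_other[OF p sC] by blast
      next
        case False
        then have "t \<in> C" using t by blast
        then show ?thesis using i sC unfolding indep_def by blast
      qed
    qed
  qed
  then show "insert y (C - {z}) \<in> IRS" using indep_IRS[OF sub card] by blast
  show "sw C (insert y (C - {z}))" using sw_intro[OF z y adj_sym[OF a]] .
qed


end

context irg begin
lemma indepD: "indep X \<Longrightarrow> s \<in> X \<Longrightarrow> t \<in> X \<Longrightarrow> \<not> adj s t"
  unfolding indep_def by blast
lemma nbr_refl: "nbr v v" by (simp add: nbr_def)
lemma nbr_adj: "adj u v \<Longrightarrow> nbr u v" by (simp add: nbr_def)
lemma not_nbr: "w \<noteq> t \<Longrightarrow> \<not> adj w t \<Longrightarrow> \<not> nbr w t" by (simp add: nbr_def)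
lemma pnI: "nbr w q \<Longrightarrow> (\<And>t. t \<in> Q \<Longrightarrow> t \<noteq> q \<Longrightarrow> w \<noteq> t \<and> \<not> adj w t) \<Longrightarrow> pn w q Q"
  unfolding pn_def nbr_def by blast
end

locale cfg = irg W F for W :: "'v set" and F +
  fixes A B C :: "'v set"
  assumes A: "A \<in> IRS" and B: "B \<in> IRS" and C: "C \<in> IRS"
  and BC: "B \<noteq> C"
  and AB: "sw A B" and AC: "sw A C"
  and H1: "\<And>X. X \<in> IRS \<Longrightarrow> sw C X \<Longrightarrow> X = A"
  and H2: "\<And>X. X \<in> IRS \<Longrightarrow> sw A X \<Longrightarrow> X = B \<or> X = C"
  and H3: "\<And>X. X \<in> IRS \<Longrightarrow> X = A \<or> X = B \<or> X = C \<or> sw B X"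
begin

lemma fA: "finite A" using IRS_fin[OF A] .
lemma fB: "finite B" using IRS_fin[OF B] .
lemma fC: "finite C" using IRS_fin[OF C] .

lemma AneB: "A \<noteq> B" using sw_diff[OF AB] by auto
lemma AneC: "A \<noteq> C" using sw_diff[OF AC] by auto

lemma D1: "P \<in> IRS \<Longrightarrow> card (A - P) \<le> 2"
proof -
  assume P: "P \<in> IRS"
  from H3[OF P] consider "P = A" | "P = B" | "P = C" | "sw B P" by blast
  then show ?thesis
  proof cases
    case 1 then show ?thesis by simp
  next
    case 2 then show ?thesis using sw_diff[OF AB] by simp
  next
    case 3 then show ?thesis using sw_diff[OF AC] by simp
  next
    case 4
    have "card (A - P) \<le> card (A - B) + card (B - P)" by (rule card_diff_tri[OF fA fB])
    then show ?thesis using sw_diff[OF AB] sw_diff[OF 4] by simp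
  qed
qed

lemma D4: "P \<in> IRS \<Longrightarrow> card (B - P) \<le> 2"
proof -
  assume P: "P \<in> IRS"
  from H3[OF P] consider "P = A" | "P = B" | "P = C" | "sw B P" by blast
  then show ?thesis
  proof cases
    case 1 then show ?thesis using sw_diff[OF sw_sym[OF AB]] by simp
  next
    case 2 then show ?thesis by simp
  next
    case 3
    have "card (B - P) \<le> card (B - A) + card (A - P)" by (rule card_diff_tri[OF fB fA])
    then show ?thesis using sw_diff[OF sw_sym[OF AB]] sw_diff[OF AC] 3 by simp
  next
    case 4 then show ?thesis using sw_diff[OF 4] by simp
  qed
qed

lemma D2: "P \<in> IRS \<Longrightarrow> card (B - P) \<ge> 2 \<Longrightarrow> P = C"
proof -
  assume P: "P \<in> IRS" and c: "card (B - P) \<ge> 2"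
  from H3[OF P] consider "P = A" | "P = B" | "P = C" | "sw B P" by blast
  then show ?thesis
  proof cases
    case 1 then show ?thesis using sw_diff[OF sw_sym[OF AB]] c by simp
  next
    case 2 then show ?thesis using c by simp
  next
    case 3 then show ?thesis .
  next
    case 4 then show ?thesis using sw_diff[OF 4] c by simp
  qed
qed

end

context cfg begin

lemma stepC: "\<not> indep C"
proof
  assume iC: "indep C"
  have leaf: "insert y (C - {z}) = A" if "z \<in> C" "y \<notin> C" "pn y z C" for z y
    using leafI[OF C iC that] H1 by blast
  obtain x a where x: "x \<in> C" and a: "a \<notin> C" and xa: "adj x a" and Ad: "A = insert a (C - {x})"
    using sw_sym[OF AC] by (rule sw_elim)
  have ax: "a \<noteq> x" using a x by blast
  have xA: "x \<notin> A" using Ad ax by simp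
  have aA: "a \<in> A" using Ad by simp
  have CA: "C - {x} \<subseteq> A" using Ad by blast
  have iB: "indep B"
  proof (rule ccontr)
    assume "\<not> indep B"
    then obtain s t where s: "s \<in> B" and t: "t \<in> B" and st: "adj s t" unfolding indep_def by blast
    have ts: "adj t s" using adj_sym[OF st] .
    have sne: "s \<noteq> t" using adj_ne[OF st] .
    have P: "bx B \<in> IRS" using bx_facts(1)[OF B] .
    have so: "s \<notin> bx B" using bx_out[OF B s t st] .
    have to: "t \<notin> bx B" using bx_out[OF B t s ts] .
    have "card (B - bx B) \<ge> 2" using card2[of "B - bx B" s t] fB s t so to sne by blast
    then have PC: "bx B = C" using D2[OF P] by blast
    have sC: "s \<notin> C" using so PC by simp
    have tC: "t \<notin> C" using to PC by simp
    have e1: "insert s (C - {pi B s}) = A"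
      using leaf[of "pi B s" s] pi_in_bx[OF s] PC sC bx_facts(2)[OF B s] by simp
    have e2: "insert t (C - {pi B t}) = A"
      using leaf[of "pi B t" t] pi_in_bx[OF t] PC tC bx_facts(2)[OF B t] by simp
    have "s \<in> insert t (C - {pi B t})" using e1 e2 by blast
    then show False using sne sC by blast
  qed
  show False
  proof (cases "pn a x C")
    case True
    obtain v b where v: "v \<in> A" and b: "b \<notin> A" and vb: "adj v b" and Bd: "B = insert b (A - {v})"
      using AB by (rule sw_elim)
    show False
    proof (cases "v = a")
      case True
      have Am: "A - {a} = C - {x}" using Ad a by auto
      have Bd': "B = insert b (C - {x})" using Bd True Am by simp
      have bx: "b \<noteq> x"
      proof
        assume "b = x" then have "B = C" using Bd' x by auto
        then show False using BC by simp
      qed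
      have bC: "b \<notin> C" using b bx CA by blast
      have bB: "b \<in> B" using Bd by simp
      have nb: "\<not> adj b t" if "t \<in> C" "t \<noteq> x" for t
        using indepD[OF iB bB] Bd' that by blast
      have abx: "adj b x"
      proof (rule ccontr)
        assume nbx: "\<not> adj b x"
        have "indep (insert b C)"
          unfolding indep_def
        proof (intro ballI)
          fix s t assume s: "s \<in> insert b C" and t: "t \<in> insert b C"
          show "\<not> adj s t"
          proof (cases "s = b")
            case sb: True
            show ?thesis
            proof (cases "t = b")
              case True then show ?thesis using sb adj_ne by blast
            next
              case False then have "t \<in> C" using t by blast
              then show ?thesis using sb nb nbx by (cases "t = x") auto
            qed
          next
            case False
            then have sC: "s \<in> C" using s by blast
            show ?thesis
            proof (cases "t = b")
              case True
              have "\<not> adj b s" using nb sC nbx by (cases "s = x") auto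
              then show ?thesis using True adj_sym by blast
            next
              case False then have "t \<in> C" using t by blast
              then show ?thesis using indepD[OF iC sC] by blast
            qed
          qed
        qed
        moreover have "insert b C \<subseteq> W" using IRS_sub[OF C] adj_W[OF vb] by blast
        ultimately have "card (insert b C) \<le> n" using indep_le by blast
        moreover have "card (insert b C) = Suc n" using bC fC IRS_card[OF C] by simp
        ultimately show False by simp
      qed
      have "pn b x C"
      proof (rule pnI)
        show "nbr b x" using abx by (rule nbr_adj)
        fix t assume "t \<in> C" "t \<noteq> x"
        then show "b \<noteq> t \<and> \<not> adj b t" using bC nb by blast
      qed
      then have "insert b (C - {x}) = A" using leaf[OF x bC] by blast
      then show False using Bd' AneB by simp
    next
      case False
      have vC: "v \<in> C" "v \<noteq> x" using v False Ad by auto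
      have bxn: "b \<noteq> x" using indepD[OF iC vC(1) x] vb by blast
      have bC: "b \<notin> C" using b bxn CA by blast
      have bB: "b \<in> B" using Bd by simp
      have aB: "a \<in> B" using Bd aA False by simp
      have ab: "a \<noteq> b" using aA b by blast
      define Q where "Q = insert b (C - {v})"
      have Qsub: "Q \<subseteq> W" using IRS_sub[OF C] adj_W[OF vb] unfolding Q_def by blast
      have Qcard: "card Q = n" unfolding Q_def using card_swap[OF fC vC(1) bC] IRS_card[OF C] by simp
      have Qw: "\<exists>w. pn w q Q" if q: "q \<in> Q" for q
      proof -
        consider "q = b" | "q = x" | "q \<in> C" "q \<noteq> x" "q \<noteq> v" using q vC unfolding Q_def by blast
        then show ?thesis
        proof cases
          case 1
          have "pn v q Q"
          proof (rule pnI)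
            show "nbr v q" using 1 vb by (simp add: nbr_adj)
            fix t assume "t \<in> Q" "t \<noteq> q"
            then have "t \<in> C" "t \<noteq> v" using 1 unfolding Q_def by auto
            then show "v \<noteq> t \<and> \<not> adj v t" using indepD[OF iC vC(1)] by blast
          qed
          then show ?thesis by blast
        next
          case 2
          have "pn a q Q"
          proof (rule pnI)
            show "nbr a q" using 2 adj_sym[OF xa] by (simp add: nbr_adj)
            fix t assume t: "t \<in> Q" "t \<noteq> q"
            show "a \<noteq> t \<and> \<not> adj a t"
            proof (cases "t = b")
              case True then show ?thesis using ab indepD[OF iB aB bB] by blast
            next
              case False
              then have "t \<in> C" "t \<noteq> x" using t 2 unfolding Q_def by auto
              then show ?thesis using pn_other[OF \<open>pn a x C\<close>] by blast
            qed
          qed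
          then show ?thesis by blast
        next
          case 3
          have qB: "q \<in> B" using Bd 3 Ad by auto
          have "pn q q Q"
          proof (rule pnI)
            show "nbr q q" by (rule nbr_refl)
            fix t assume t: "t \<in> Q" "t \<noteq> q"
            show "q \<noteq> t \<and> \<not> adj q t"
            proof (cases "t = b")
              case True then show ?thesis using indepD[OF iB qB bB] t by blast
            next
              case False
              then have "t \<in> C" using t unfolding Q_def by auto
              then show ?thesis using indepD[OF iC 3(1)] t by blast
            qed
          qed
          then show ?thesis by blast
        qed
      qed
      have QI: "Q \<in> IRS" using IRS_intro[OF Qsub Qcard] Qw by blast
      have "sw C Q" unfolding Q_def using sw_intro[OF vC(1) bC vb] .
      then have "Q = A" using H1[OF QI] by blast
      moreover have "x \<in> Q" unfolding Q_def using x vC by auto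
      ultimately show False using xA by simp
    qed
  next
    case False
    have "nbr a x" using adj_sym[OF xa] by (rule nbr_adj)
    then obtain z where z: "z \<in> C" "z \<noteq> x" and nz: "nbr a z" using False unfolding pn_def by blast
    have az: "adj a z" using nz a z unfolding nbr_def by blast
    have zA: "z \<in> A" using Ad z by simp
    have uniq: "z' = z" if z': "z' \<in> C" "z' \<noteq> x" "adj a z'" for z'
    proof (rule ccontr)
      assume ne: "z' \<noteq> z"
      have z'A: "z' \<in> A" using Ad z' by simp
      have P: "bx A \<in> IRS" using bx_facts(1)[OF A] .
      have o1: "a \<notin> bx A" using bx_out[OF A aA zA az] .
      have o2: "z \<notin> bx A" using bx_out[OF A zA aA adj_sym[OF az]] .
      have o3: "z' \<notin> bx A" using bx_out[OF A z'A aA adj_sym[OF z'(3)]] .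
      have "a \<noteq> z" "a \<noteq> z'" using a z z' by auto
      then have "card (A - bx A) \<ge> 3" using card3[of "A - bx A" a z z'] fA aA zA z'A o1 o2 o3 ne by blast
      then show False using D1[OF P] by simp
    qed
    define p where "p = pi A z"
    have pp: "pn p z A" unfolding p_def using pi_pn[OF A zA] .
    have pA: "p \<notin> A" and pz: "adj p z" using pi_out[OF A zA aA adj_sym[OF az]] unfolding p_def by auto
    have px: "p \<noteq> x" using indepD[OF iC z(1) x] pz adj_sym by blast
    have pC: "p \<notin> C" using pA px CA by blast
    have ap: "a \<noteq> p" using aA pA by blast
    have nap: "\<not> adj a p" using pn_other[OF pp aA] az adj_ne by blast
    define Q where "Q = insert p (C - {z})"
    have Qsub: "Q \<subseteq> W" using IRS_sub[OF C] adj_W[OF pz] unfolding Q_def by blast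
    have Qcard: "card Q = n" unfolding Q_def using card_swap[OF fC z(1) pC] IRS_card[OF C] by simp
    have Qw: "\<exists>w. pn w q Q" if q: "q \<in> Q" for q
    proof -
      consider "q = p" | "q = x" | "q \<in> C" "q \<noteq> x" "q \<noteq> z" using q z unfolding Q_def by blast
      then show ?thesis
      proof cases
        case 1
        have "pn z q Q"
        proof (rule pnI)
          show "nbr z q" using 1 adj_sym[OF pz] by (simp add: nbr_adj)
          fix t assume "t \<in> Q" "t \<noteq> q"
          then have "t \<in> C" "t \<noteq> z" using 1 unfolding Q_def by auto
          then show "z \<noteq> t \<and> \<not> adj z t" using indepD[OF iC z(1)] by blast
        qed
        then show ?thesis by blast
      next
        case 2
        have "pn a q Q"
        proof (rule pnI)
          show "nbr a q" using 2 adj_sym[OF xa] by (simp add: nbr_adj)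
          fix t assume t: "t \<in> Q" "t \<noteq> q"
          show "a \<noteq> t \<and> \<not> adj a t"
          proof (cases "t = p")
            case True then show ?thesis using ap nap by blast
          next
            case False
            then have tC: "t \<in> C" "t \<noteq> x" "t \<noteq> z" using t 2 unfolding Q_def by auto
            then have "\<not> adj a t" using uniq by blast
            then show ?thesis using tC a by blast
          qed
        qed
        then show ?thesis by blast
      next
        case 3
        have qA: "q \<in> A" using Ad 3 by auto
        have "pn q q Q"
        proof (rule pnI)
          show "nbr q q" by (rule nbr_refl)
          fix t assume t: "t \<in> Q" "t \<noteq> q"
          show "q \<noteq> t \<and> \<not> adj q t"
          proof (cases "t = p")
            case True then show ?thesis using pn_other[OF pp qA] 3 pC by blast
          next
            case False
            then have "t \<in> C" using t unfolding Q_def by auto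
            then show ?thesis using indepD[OF iC 3(1)] t by blast
          qed
        qed
        then show ?thesis by blast
      qed
    qed
    have QI: "Q \<in> IRS" using IRS_intro[OF Qsub Qcard] Qw by blast
    have "sw C Q" unfolding Q_def using sw_intro[OF z(1) pC adj_sym[OF pz]] .
    then have "Q = A" using H1[OF QI] by blast
    moreover have "x \<in> Q" unfolding Q_def using x z by auto
    ultimately show False using xA by simp
  qed
qed

end

context cfg begin

lemma stepA: "indep A"
proof (rule ccontr)
  assume "\<not> indep A"
  then obtain y z where y: "y \<in> A" and z: "z \<in> A" and yz: "adj y z" unfolding indep_def by blast
  have zy: "adj z y" using adj_sym[OF yz] .
  have yne: "y \<noteq> z" using adj_ne[OF yz] .
  have P: "bx A \<in> IRS" using bx_facts(1)[OF A] .
  have ni: "w = y \<or> w = z" if w: "w \<in> A" and t: "t \<in> A" and wt: "adj w t" for w t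
  proof (rule ccontr)
    assume ne: "\<not> (w = y \<or> w = z)"
    have o1: "w \<notin> bx A" using bx_out[OF A w t wt] .
    have o2: "y \<notin> bx A" using bx_out[OF A y z yz] .
    have o3: "z \<notin> bx A" using bx_out[OF A z y zy] .
    have "card (A - bx A) \<ge> 3" using card3[of "A - bx A" w y z] fA w y z o1 o2 o3 ne yne by blast
    then show False using D1[OF P] by simp
  qed
  have mk: "insert p (A - {u}) \<in> IRS \<and> sw A (insert p (A - {u})) \<and> indep (insert p (A - {u}))"
    if u: "u \<in> A" and u': "u' \<in> A" and uu: "adj u u'" and uyz: "u = y \<or> u = z" and u'yz: "u' = y \<or> u' = z"
      and pp: "pn p u A" for u u' p
  proof -
    have pA: "p \<notin> A" and pu: "adj p u" using pn_nonisol[OF pp u u' uu] by auto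
    have u'ne: "u' \<noteq> u" using adj_ne[OF uu] by simp
    have ind: "indep (insert p (A - {u}))"
      unfolding indep_def
    proof (intro ballI)
      fix s t assume s: "s \<in> insert p (A - {u})" and t: "t \<in> insert p (A - {u})"
      show "\<not> adj s t"
      proof (cases "s = p")
        case sp: True
        show ?thesis
        proof (cases "t = p")
          case True then show ?thesis using sp adj_ne by blast
        next
          case False then have "t \<in> A" "t \<noteq> u" using t by auto
          then show ?thesis using sp pn_other[OF pp] by blast
        qed
      next
        case False
        then have sA: "s \<in> A" "s \<noteq> u" using s by auto
        show ?thesis
        proof (cases "t = p")
          case True then show ?thesis using sA pn_other[OF pp] by blast
        next
          case False then have tA: "t \<in> A" "t \<noteq> u" using t by auto
          show ?thesis
          proof
            assume st: "adj s t"
            have "s = u'" using ni[OF sA(1) tA(1) st] sA uyz u'yz u'ne by blast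
            moreover have "t = u'" using ni[OF tA(1) sA(1) adj_sym[OF st]] tA uyz u'yz u'ne by blast
            ultimately show False using adj_ne[OF st] by simp
          qed
        qed
      qed
    qed
    have sub: "insert p (A - {u}) \<subseteq> W" using IRS_sub[OF A] adj_W[OF pu] by blast
    have card: "card (insert p (A - {u})) = n" using card_swap[OF fA u pA] IRS_card[OF A] by simp
    show ?thesis using indep_IRS[OF sub card ind] sw_intro[OF u pA adj_sym[OF pu]] ind by blast
  qed
  obtain p where pp: "pn p z A" using IRS_pn[OF A z] by blast
  obtain q where qq: "pn q y A" using IRS_pn[OF A y] by blast
  have m1: "insert p (A - {z}) \<in> IRS \<and> sw A (insert p (A - {z})) \<and> indep (insert p (A - {z}))"
    using mk[OF z y zy _ _ pp] by blast
  have m2: "insert q (A - {y}) \<in> IRS \<and> sw A (insert q (A - {y})) \<and> indep (insert q (A - {y}))"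
    using mk[OF y z yz _ _ qq] by blast
  have qA: "q \<notin> A" using pn_nonisol[OF qq y z yz] by blast
  have ne: "insert p (A - {z}) \<noteq> insert q (A - {y})"
  proof
    assume eq: "insert p (A - {z}) = insert q (A - {y})"
    have "y \<in> insert p (A - {z})" using y yne by simp
    then have "y \<in> insert q (A - {y})" using eq by simp
    then show False using qA y by auto
  qed
  have c1: "insert p (A - {z}) = B \<or> insert p (A - {z}) = C" using H2 m1 by blast
  have c2: "insert q (A - {y}) = B \<or> insert q (A - {y}) = C" using H2 m2 by blast
  have "insert p (A - {z}) = C \<or> insert q (A - {y}) = C" using c1 c2 ne by blast
  then have "indep C" using m1 m2 by metis
  then show False using stepC by simp
qed

end

context cfg begin

lemma stepAlpha: "indep B"
proof (rule ccontr)
  assume niB: "\<not> indep B"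
  have iA: "indep A" by (rule stepA)
  obtain z b where z: "z \<in> A" and b: "b \<notin> A" and zb: "adj z b" and Bd: "B = insert b (A - {z})"
    using AB by (rule sw_elim)
  have bB: "b \<in> B" using Bd by simp
  have AB': "A - {z} \<subseteq> B" using Bd by blast
  obtain s t where s: "s \<in> B" and t: "t \<in> B" and st: "adj s t" using niB unfolding indep_def by blast
  have "\<exists>x. x \<in> A \<and> x \<noteq> z \<and> adj b x"
  proof (cases "s = b")
    case True
    have "t \<noteq> b" using adj_ne[OF st] True by simp
    then show ?thesis using t Bd st True by auto
  next
    case sb: False
    show ?thesis
    proof (cases "t = b")
      case True
      then show ?thesis using s sb Bd adj_sym[OF st] by auto
    next
      case False
      then have "s \<in> A" "t \<in> A" using s t sb Bd by auto
      then show ?thesis using indepD[OF iA] st by blast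
    qed
  qed
  then obtain x where x: "x \<in> A" "x \<noteq> z" and bx: "adj b x" by blast
  have xb: "adj x b" using adj_sym[OF bx] .
  have xB: "x \<in> B" using x Bd by simp
  have bxne: "b \<noteq> x" using b x by blast
  have uniq: "x' = x" if x': "x' \<in> A" "x' \<noteq> z" "adj b x'" for x'
  proof (rule ccontr)
    assume ne: "x' \<noteq> x"
    have x'B: "x' \<in> B" using x' Bd by simp
    have P: "bx B \<in> IRS" using bx_facts(1)[OF B] .
    have o1: "b \<notin> bx B" using bx_out[OF B bB xB bx] .
    have o2: "x \<notin> bx B" using bx_out[OF B xB bB xb] .
    have o3: "x' \<notin> bx B" using bx_out[OF B x'B bB adj_sym[OF x'(3)]] .
    have "b \<noteq> x'" using b x' by blast
    then have "card (B - bx B) \<ge> 3" using card3[of "B - bx B" b x x'] fB bB xB x'B o1 o2 o3 ne bxne by blast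
    then show False using D4[OF P] by simp
  qed
  define c where "c = pi B x"
  have cp: "pn c x B" unfolding c_def using pi_pn[OF B xB] .
  have cB: "c \<notin> B" and cx: "adj c x" using pi_out[OF B xB bB xb] unfolding c_def by auto
  have cz: "c \<noteq> z" using indepD[OF iA z x(1)] cx adj_sym by blast
  have cA: "c \<notin> A" using cB cz AB' by blast
  have bc: "b \<noteq> c" using bB cB by blast
  have nbc: "\<not> adj b c" "\<not> adj c b" using pn_other[OF cp bB bxne] adj_sym by blast+
  have ncR: "\<not> adj c r \<and> \<not> adj r c" if "r \<in> A" "r \<noteq> z" "r \<noteq> x" for r
    using pn_other[OF cp] that AB' by blast
  have nbR: "\<not> adj b r \<and> \<not> adj r b" if "r \<in> A" "r \<noteq> z" "r \<noteq> x" for r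
    using uniq that adj_sym by blast
  define P where "P = insert c (A - {x})"
  have Psub: "P \<subseteq> W" using IRS_sub[OF A] adj_W[OF cx] unfolding P_def by blast
  have Pcard: "card P = n" unfolding P_def using card_swap[OF fA x(1) cA] IRS_card[OF A] by simp
  have Pw: "\<exists>w. pn w q P" if q: "q \<in> P" for q
  proof -
    consider "q = c" | "q = z" | "q \<in> A" "q \<noteq> x" "q \<noteq> z" using q x unfolding P_def by blast
    then show ?thesis
    proof cases
      case 1
      have "pn x q P"
      proof (rule pnI)
        show "nbr x q" using 1 adj_sym[OF cx] by (simp add: nbr_adj)
        fix t assume "t \<in> P" "t \<noteq> q"
        then have "t \<in> A" "t \<noteq> x" using 1 unfolding P_def by auto
        then show "x \<noteq> t \<and> \<not> adj x t" using indepD[OF iA x(1)] by blast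
      qed
      then show ?thesis by blast
    next
      case 2
      have "pn b q P"
      proof (rule pnI)
        show "nbr b q" using 2 adj_sym[OF zb] by (simp add: nbr_adj)
        fix t assume t: "t \<in> P" "t \<noteq> q"
        show "b \<noteq> t \<and> \<not> adj b t"
        proof (cases "t = c")
          case True then show ?thesis using bc nbc by blast
        next
          case False
          then have "t \<in> A" "t \<noteq> x" "t \<noteq> z" using t 2 unfolding P_def by auto
          then show ?thesis using nbR b by blast
        qed
      qed
      then show ?thesis by blast
    next
      case 3
      have "pn q q P"
      proof (rule pnI)
        show "nbr q q" by (rule nbr_refl)
        fix t assume t: "t \<in> P" "t \<noteq> q"
        show "q \<noteq> t \<and> \<not> adj q t"
        proof (cases "t = c")
          case True then show ?thesis using ncR[OF 3(1) 3(3) 3(2)] cA 3(1) by blast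
        next
          case False
          then have "t \<in> A" using t unfolding P_def by auto
          then show ?thesis using indepD[OF iA 3(1)] t by blast
        qed
      qed
      then show ?thesis by blast
    qed
  qed
  have PI: "P \<in> IRS" using IRS_intro[OF Psub Pcard] Pw by blast
  have "b \<in> B - P" "x \<in> B - P" using bB xB b bc x cB unfolding P_def by auto
  then have "card (B - P) \<ge> 2" using card2[of "B - P" b x] fB bxne by blast
  then have PC: "P = C" using D2[OF PI] by blast
  define Q where "Q = insert b (C - {z})"
  have zC: "z \<in> C" using PC x z unfolding P_def by auto
  have bC: "b \<notin> C" using PC bc b unfolding P_def by auto
  have Qel: "q = b \<or> q = c \<or> (q \<in> A \<and> q \<noteq> x \<and> q \<noteq> z)" if "q \<in> Q" for q
    using that PC unfolding Q_def P_def by auto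
  have iQ: "indep Q"
    unfolding indep_def
  proof (intro ballI)
    fix s t assume s: "s \<in> Q" and t: "t \<in> Q"
    show "\<not> adj s t"
      using Qel[OF s] Qel[OF t] nbc ncR nbR indepD[OF iA] adj_ne by metis
  qed
  have Qsub: "Q \<subseteq> W" using IRS_sub[OF C] adj_W[OF zb] unfolding Q_def by blast
  have Qcard: "card Q = n" unfolding Q_def using card_swap[OF fC zC bC] IRS_card[OF C] by simp
  have QI: "Q \<in> IRS" using indep_IRS[OF Qsub Qcard iQ] .
  have "sw C Q" unfolding Q_def using sw_intro[OF zC bC zb] .
  then have "Q = A" using H1[OF QI] by blast
  moreover have "c \<in> Q" using PC cz unfolding Q_def P_def by auto
  ultimately show False using cA by simp
qed

end

context cfg begin

lemma beta_fin:
  assumes iA: "indep A" and iB: "indep B" and Cd: "C = insert c (A - {x})" and x: "x \<in> A"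
    and c: "c \<notin> A" and xc: "adj x c"
    and zi: "zi \<in> A" "zi \<noteq> x" "adj c zi" and zj: "zj \<in> A" "zj \<noteq> x" "adj c zj" and zij: "zi \<noteq> zj"
    and three: "\<And>z'. z' \<in> A \<Longrightarrow> z' \<noteq> x \<Longrightarrow> adj c z' \<Longrightarrow> z' = zi \<or> z' = zj"
    and ppi: "pn pi' zi C" "pi' \<notin> C" "adj pi' zi"
    and ppj: "pn pj zj C" "pj \<notin> C" "adj pj zj"
    and Bd: "B = insert pj (A - {zj})"
  shows False
proof -
  have cC: "c \<in> C" using Cd by simp
  have xC: "x \<notin> C" using Cd c x by auto
  have AC': "A - {x} \<subseteq> C" using Cd by blast
  have cx: "c \<noteq> x" using c x by blast
  have cne: "c \<noteq> zi" "c \<noteq> zj" using c zi zj by auto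
  have pjx: "pj \<noteq> x" using indepD[OF iA zj(1) x] ppj(3) adj_sym by blast
  have pix: "pi' \<noteq> x" using indepD[OF iA zi(1) x] ppi(3) adj_sym by blast
  have pjA: "pj \<notin> A" using ppj(2) pjx AC' by blast
  have piA: "pi' \<notin> A" using ppi(2) pix AC' by blast
  have pjB: "pj \<in> B" and xB: "x \<in> B" using Bd x zj by auto
  have npjx: "\<not> adj pj x" using indepD[OF iB pjB xB] .
  have ncr: "\<not> adj c r \<and> \<not> adj r c" if "r \<in> A" "r \<noteq> x" "r \<noteq> zi" "r \<noteq> zj" for r
    using three that adj_sym by blast
  have npi: "pi' \<noteq> t \<and> \<not> adj pi' t \<and> \<not> adj t pi'" if "t \<in> C" "t \<noteq> zi" for t
    using pn_other[OF ppi(1) that] by blast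
  have npj: "pj \<noteq> t \<and> \<not> adj pj t \<and> \<not> adj t pj" if "t \<in> C" "t \<noteq> zj" for t
    using pn_other[OF ppj(1) that] by blast
  show False
  proof (cases "adj pi' x")
    case False
    define B' where "B' = insert pi' (A - {zi})"
    have el: "q = pi' \<or> (q \<in> A \<and> q \<noteq> zi)" if "q \<in> B'" for q using that unfolding B'_def by auto
    have "\<not> adj pi' q \<and> \<not> adj q pi'" if "q \<in> A" "q \<noteq> zi" for q
    proof (cases "q = x")
      case True then show ?thesis using False adj_sym by blast
    next
      case False
      then have "q \<in> C" using that AC' by blast
      then show ?thesis using npi that by blast
    qed
    then have iB': "indep B'"
      unfolding indep_def using el indepD[OF iA] adj_ne by metis
    have sub: "B' \<subseteq> W" using IRS_sub[OF A] adj_W[OF ppi(3)] unfolding B'_def by blast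
    have card: "card B' = n" unfolding B'_def using card_swap[OF fA zi(1) piA] IRS_card[OF A] by simp
    have BI: "B' \<in> IRS" using indep_IRS[OF sub card iB'] .
    have "sw A B'" unfolding B'_def using sw_intro[OF zi(1) piA adj_sym[OF ppi(3)]] .
    then have "B' = B \<or> B' = C" using H2[OF BI] by blast
    moreover have "x \<in> B'" unfolding B'_def using x zi by auto
    moreover have "zj \<in> B'" unfolding B'_def using zj zij by auto
    moreover have "zj \<notin> B" using Bd pjA zj by auto
    ultimately show False using xC by blast
  next
    case True
    define Q where "Q = insert c (A - {zi})"
    have Qsub: "Q \<subseteq> W" using IRS_sub[OF A] adj_W[OF zi(3)] unfolding Q_def by blast
    have Qcard: "card Q = n" unfolding Q_def using card_swap[OF fA zi(1) c] IRS_card[OF A] by simp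
    have Qw: "\<exists>w. pn w q Q" if q: "q \<in> Q" for q
    proof -
      consider "q = c" | "q = x" | "q = zj" | "q \<in> A" "q \<noteq> x" "q \<noteq> zi" "q \<noteq> zj"
        using q unfolding Q_def by blast
      then show ?thesis
      proof cases
        case 1
        have "pn zi q Q"
        proof (rule pnI)
          show "nbr zi q" using 1 adj_sym[OF zi(3)] by (simp add: nbr_adj)
          fix t assume "t \<in> Q" "t \<noteq> q"
          then have "t \<in> A" "t \<noteq> zi" using 1 unfolding Q_def by auto
          then show "zi \<noteq> t \<and> \<not> adj zi t" using indepD[OF iA zi(1)] by blast
        qed
        then show ?thesis by blast
      next
        case 2
        have "pn pi' q Q"
        proof (rule pnI)
          show "nbr pi' q" using 2 True by (simp add: nbr_adj)
          fix t assume t: "t \<in> Q" "t \<noteq> q"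
          have "t \<in> C" "t \<noteq> zi" using t 2 AC' cC cne unfolding Q_def by auto
          then show "pi' \<noteq> t \<and> \<not> adj pi' t" using npi by blast
        qed
        then show ?thesis by blast
      next
        case 3
        have "pn pj q Q"
        proof (rule pnI)
          show "nbr pj q" using 3 ppj(3) by (simp add: nbr_adj)
          fix t assume t: "t \<in> Q" "t \<noteq> q"
          show "pj \<noteq> t \<and> \<not> adj pj t"
          proof (cases "t = x")
            case True then show ?thesis using pjx npjx by blast
          next
            case False
            have "t \<in> C" "t \<noteq> zj" using t 3 AC' cC False unfolding Q_def by auto
            then show ?thesis using npj by blast
          qed
        qed
        then show ?thesis by blast
      next
        case 4
        have "pn q q Q"
        proof (rule pnI)
          show "nbr q q" by (rule nbr_refl)
          fix t assume t: "t \<in> Q" "t \<noteq> q"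
          show "q \<noteq> t \<and> \<not> adj q t"
          proof (cases "t = c")
            case True then show ?thesis using ncr[OF 4(1) 4(2) 4(3) 4(4)] c 4(1) by blast
          next
            case False
            then have "t \<in> A" using t unfolding Q_def by auto
            then show ?thesis using indepD[OF iA 4(1)] t by blast
          qed
        qed
        then show ?thesis by blast
      qed
    qed
    have QI: "Q \<in> IRS" using IRS_intro[OF Qsub Qcard] Qw by blast
    have "sw A Q" unfolding Q_def using sw_intro[OF zi(1) c adj_sym[OF zi(3)]] .
    then have "Q = B \<or> Q = C" using H2[OF QI] by blast
    moreover have "x \<in> Q" unfolding Q_def using x zi by auto
    moreover have "c \<in> Q" unfolding Q_def by simp
    moreover have "c \<notin> B" using Bd c ppj(2) cC by auto
    ultimately show False using xC by blast
  qed
qed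

lemma stepBeta: False
proof -
  have iA: "indep A" by (rule stepA)
  have iB: "indep B" by (rule stepAlpha)
  have niC: "\<not> indep C" by (rule stepC)
  obtain x c where x: "x \<in> A" and c: "c \<notin> A" and xc: "adj x c" and Cd: "C = insert c (A - {x})"
    using AC by (rule sw_elim)
  have cC: "c \<in> C" using Cd by simp
  have AC': "A - {x} \<subseteq> C" using Cd by blast
  obtain s t where s: "s \<in> C" and t: "t \<in> C" and st: "adj s t" using niC unfolding indep_def by blast
  have "\<exists>z. z \<in> A \<and> z \<noteq> x \<and> adj c z"
  proof (cases "s = c")
    case True
    have "t \<noteq> c" using adj_ne[OF st] True by simp
    then show ?thesis using t Cd st True by auto
  next
    case sc: False
    show ?thesis
    proof (cases "t = c")
      case True
      then show ?thesis using s sc Cd adj_sym[OF st] by auto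
    next
      case False
      then have "s \<in> A" "t \<in> A" using s t sc Cd by auto
      then show ?thesis using indepD[OF iA] st by blast
    qed
  qed
  then obtain z1 where z1: "z1 \<in> A" "z1 \<noteq> x" "adj c z1" by blast
  have z1C: "z1 \<in> C" using z1 Cd by simp
  have cz1: "c \<noteq> z1" using c z1 by blast
  show False
  proof (cases "\<forall>z'. z' \<in> A \<longrightarrow> z' \<noteq> x \<longrightarrow> adj c z' \<longrightarrow> z' = z1")
    case True
    define p where "p = pi C z1"
    have pp: "pn p z1 C" unfolding p_def using pi_pn[OF C z1C] .
    have pC: "p \<notin> C" and pz: "adj p z1" using pi_out[OF C z1C cC adj_sym[OF z1(3)]] unfolding p_def by auto
    define Q where "Q = insert p (C - {z1})"
    have el: "q = p \<or> q = c \<or> (q \<in> A \<and> q \<noteq> x \<and> q \<noteq> z1)" if "q \<in> Q" for q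
      using that Cd unfolding Q_def by auto
    have f1: "\<not> adj p c \<and> \<not> adj c p" using pn_other[OF pp cC cz1] by blast
    have f2: "\<not> adj p r \<and> \<not> adj r p" if "r \<in> A" "r \<noteq> x" "r \<noteq> z1" for r
      using pn_other[OF pp] that AC' by blast
    have f3: "\<not> adj c r \<and> \<not> adj r c" if "r \<in> A" "r \<noteq> x" "r \<noteq> z1" for r
      using True that adj_sym by blast
    have iQ: "indep Q"
      unfolding indep_def using el f1 f2 f3 indepD[OF iA] adj_ne by metis
    have Qsub: "Q \<subseteq> W" using IRS_sub[OF C] adj_W[OF pz] unfolding Q_def by blast
    have Qcard: "card Q = n" unfolding Q_def using card_swap[OF fC z1C pC] IRS_card[OF C] by simp
    have QI: "Q \<in> IRS" using indep_IRS[OF Qsub Qcard iQ] .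
    have "sw C Q" unfolding Q_def using sw_intro[OF z1C pC adj_sym[OF pz]] .
    then have "Q = A" using H1[OF QI] by blast
    moreover have "c \<in> Q" unfolding Q_def using cC cz1 by simp
    ultimately show False using c by simp
  next
    case False
    then obtain z2 where z2: "z2 \<in> A" "z2 \<noteq> x" "adj c z2" and z12: "z2 \<noteq> z1" by blast
    have z2C: "z2 \<in> C" using z2 Cd by simp
    have P0: "bx C \<in> IRS" using bx_facts(1)[OF C] .
    have three: "z' = z1 \<or> z' = z2" if z': "z' \<in> A" "z' \<noteq> x" "adj c z'" for z'
    proof (rule ccontr)
      assume ne: "\<not> (z' = z1 \<or> z' = z2)"
      have z'C: "z' \<in> C" using z' Cd by simp
      have o1: "z1 \<notin> bx C" using bx_out[OF C z1C cC adj_sym[OF z1(3)]] .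
      have o2: "z2 \<notin> bx C" using bx_out[OF C z2C cC adj_sym[OF z2(3)]] .
      have o3: "z' \<notin> bx C" using bx_out[OF C z'C cC adj_sym[OF z'(3)]] .
      have "card (A - bx C) \<ge> 3" using card3[of "A - bx C" z1 z2 z'] fA z1 z2 z' o1 o2 o3 ne z12 by blast
      then show False using D1[OF P0] by simp
    qed
    define p1 where "p1 = pi C z1"
    define p2 where "p2 = pi C z2"
    have pp1: "pn p1 z1 C" unfolding p1_def using pi_pn[OF C z1C] .
    have pp2: "pn p2 z2 C" unfolding p2_def using pi_pn[OF C z2C] .
    have p1C: "p1 \<notin> C" and p1z: "adj p1 z1" using pi_out[OF C z1C cC adj_sym[OF z1(3)]] unfolding p1_def by auto
    have p2C: "p2 \<notin> C" and p2z: "adj p2 z2" using pi_out[OF C z2C cC adj_sym[OF z2(3)]] unfolding p2_def by auto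
    have p1x: "p1 \<noteq> x" using indepD[OF iA z1(1) x] p1z adj_sym by blast
    have p2x: "p2 \<noteq> x" using indepD[OF iA z2(1) x] p2z adj_sym by blast
    have p1A: "p1 \<notin> A" using p1C p1x AC' by blast
    have p2A: "p2 \<notin> A" using p2C p2x AC' by blast
    have n21: "\<not> adj p2 z1" using pn_other[OF pp2 z1C] z12 by auto
    have n12: "\<not> adj p1 z2" using pn_other[OF pp1 z2C] z12 by auto
    have p12: "p1 \<noteq> p2" using n21 p1z by blast
    define P1 where "P1 = insert p1 (A - {z1})"
    define P where "P = insert p2 (P1 - {z2})"
    have z2P1: "z2 \<in> P1" unfolding P1_def using z2 z12 by simp
    have p2P1: "p2 \<notin> P1" unfolding P1_def using p2A p12 by auto
    have fP1: "finite P1" unfolding P1_def using fA by simp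
    have Pcard: "card P = n" unfolding P_def using card_swap[OF fP1 z2P1 p2P1] card_swap[OF fA z1(1) p1A] IRS_card[OF A]
      unfolding P1_def by simp
    have Psub: "P \<subseteq> W" using IRS_sub[OF A] adj_W[OF p1z] adj_W[OF p2z] unfolding P_def P1_def by blast
    have Pel: "q = p1 \<or> q = p2 \<or> (q \<in> A \<and> q \<noteq> z1 \<and> q \<noteq> z2)" if "q \<in> P" for q
      using that unfolding P_def P1_def by auto
    have ncr: "\<not> adj c r" if "r \<in> A" "r \<noteq> x" "r \<noteq> z1" "r \<noteq> z2" for r
      using three that by blast
    have Pw: "\<exists>w. pn w q P" if q: "q \<in> P" for q
    proof -
      consider "q = p1" | "q = p2" | "q = x" | "q \<in> A" "q \<noteq> x" "q \<noteq> z1" "q \<noteq> z2"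
        using Pel[OF q] by blast
      then show ?thesis
      proof cases
        case 1
        have "pn z1 q P"
        proof (rule pnI)
          show "nbr z1 q" using 1 adj_sym[OF p1z] by (simp add: nbr_adj)
          fix t assume t: "t \<in> P" "t \<noteq> q"
          show "z1 \<noteq> t \<and> \<not> adj z1 t"
          proof (cases "t = p2")
            case True then show ?thesis using p2A z1(1) n21 adj_sym by blast
          next
            case False
            then have "t \<in> A" "t \<noteq> z1" using Pel[OF t(1)] t 1 by auto
            then show ?thesis using indepD[OF iA z1(1)] by blast
          qed
        qed
        then show ?thesis by blast
      next
        case 2
        have "pn z2 q P"
        proof (rule pnI)
          show "nbr z2 q" using 2 adj_sym[OF p2z] by (simp add: nbr_adj)
          fix t assume t: "t \<in> P" "t \<noteq> q"
          show "z2 \<noteq> t \<and> \<not> adj z2 t"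
          proof (cases "t = p1")
            case True then show ?thesis using p1A z2(1) n12 adj_sym by blast
          next
            case False
            then have "t \<in> A" "t \<noteq> z2" using Pel[OF t(1)] t 2 by auto
            then show ?thesis using indepD[OF iA z2(1)] by blast
          qed
        qed
        then show ?thesis by blast
      next
        case 3
        have "pn c q P"
        proof (rule pnI)
          show "nbr c q" using 3 adj_sym[OF xc] by (simp add: nbr_adj)
          fix t assume t: "t \<in> P" "t \<noteq> q"
          show "c \<noteq> t \<and> \<not> adj c t"
          proof -
            consider "t = p1" | "t = p2" | "t \<in> A" "t \<noteq> z1" "t \<noteq> z2" using Pel[OF t(1)] by blast
            then show ?thesis
            proof cases
              case 1 then show ?thesis using pn_other[OF pp1 cC] cz1 p1C cC by blast
            next
              case 2 
              have "c \<noteq> z2" using c z2 by blast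
              then show ?thesis using 2 pn_other[OF pp2 cC] p2C cC by blast
            next
              case 3 then show ?thesis using ncr[of t] t \<open>q = x\<close> c by blast
            qed
          qed
        qed
        then show ?thesis by blast
      next
        case 4
        have "pn q q P"
        proof (rule pnI)
          show "nbr q q" by (rule nbr_refl)
          fix t assume t: "t \<in> P" "t \<noteq> q"
          have qC: "q \<in> C" using 4 AC' by blast
          consider "t = p1" | "t = p2" | "t \<in> A" "t \<noteq> z1" "t \<noteq> z2" using Pel[OF t(1)] by blast
          then show "q \<noteq> t \<and> \<not> adj q t"
          proof cases
            case 1 then show ?thesis using pn_other[OF pp1 qC] 4 by blast
          next
            case 2 then show ?thesis using pn_other[OF pp2 qC] 4 by blast
          next
            case 3 then show ?thesis using indepD[OF iA 4(1)] t by blast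
          qed
        qed
        then show ?thesis by blast
      qed
    qed
    have PI: "P \<in> IRS" using IRS_intro[OF Psub Pcard] Pw by blast
    have z1P: "z1 \<notin> P" using Pel z12 p1A p2A z1(1) by blast
    have z2P: "z2 \<notin> P" using Pel z12 p1A p2A z2(1) by blast
    have xP: "x \<in> P" unfolding P_def P1_def using x z1 z2 by auto
    have xC: "x \<notin> C" using Cd c x by auto
    have "card (A - P) \<ge> 2" using card2[of "A - P" z1 z2] fA z1 z2 z1P z2P z12 by blast
    then have PnA: "P \<noteq> A" and PnB: "P \<noteq> B" using sw_diff[OF AB] by auto
    have PnC: "P \<noteq> C" using xP xC by blast
    have swBP: "sw B P" using H3[OF PI] PnA PnB PnC by blast
    obtain u b where u: "u \<in> A" and b: "b \<notin> A" and ub: "adj u b" and Bd: "B = insert b (A - {u})"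
      using AB by (rule sw_elim)
    obtain u' b' where u': "u' \<in> B" and b': "b' \<notin> B" and ub': "adj u' b'" and Pd: "P = insert b' (B - {u'})"
      using swBP by (rule sw_elim)
    have zz1: "u = z1 \<or> u' = z1" using z1P Pd Bd z1(1) by auto
    have zz2: "u = z2 \<or> u' = z2" using z2P Pd Bd z2(1) by auto
    have q1: "p1 = b \<or> p1 = b'"
    proof -
      have "p1 \<in> P" unfolding P_def P1_def using p12 p1A z2(1) by auto
      then show ?thesis using Pd Bd p1A by auto
    qed
    have q2: "p2 = b \<or> p2 = b'"
    proof -
      have "p2 \<in> P" unfolding P_def by simp
      then show ?thesis using Pd Bd p2A by auto
    qed
    have bp: "b = p1 \<or> b = p2" using q1 q2 p12 by blast
    have uz: "u = z1 \<or> u = z2" using zz1 zz2 z12 by blast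
    show False
    proof (cases "u = z1")
      case True
      have "b = p1" using bp True ub n21 adj_sym by blast
      then have Bd': "B = insert p1 (A - {z1})" using Bd True by simp
      show False
        by (rule beta_fin[OF iA iB Cd x c xc z2 z1 z12 _ pp2 p2C p2z pp1 p1C p1z Bd'])
           (use three in blast)
    next
      case False
      then have uz2: "u = z2" using uz by blast
      have "b = p2" using bp uz2 ub n12 adj_sym by blast
      then have Bd': "B = insert p2 (A - {z2})" using Bd uz2 by simp
      show False
        by (rule beta_fin[OF iA iB Cd x c xc z1 z2 z12[symmetric] _ pp1 p1C p1z pp2 p2C p2z Bd'])
           (use three in blast)
    qed
  qed
qed

end

lemma no_config:
  assumes "graph W F" and "A \<in> IR_sets W F" "B \<in> IR_sets W F" "C \<in> IR_sets W F" "B \<noteq> C"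
    and "irg.sw F A B" "irg.sw F A C"
    and "\<And>X. X \<in> IR_sets W F \<Longrightarrow> irg.sw F C X \<Longrightarrow> X = A"
    and "\<And>X. X \<in> IR_sets W F \<Longrightarrow> irg.sw F A X \<Longrightarrow> X = B \<or> X = C"
    and "\<And>X. X \<in> IR_sets W F \<Longrightarrow> X = A \<or> X = B \<or> X = C \<or> irg.sw F B X"
  shows False
proof -
  interpret cfg W F A B C
    using assms by unfold_locales auto
  show False by (rule stepBeta)
qed

locale tr =
  fixes V :: "'a set" and E :: "'a set set"
  assumes tr: "tree V E"
begin

lemma gV: "graph V E" using tr by (simp add: tree_def)
lemma conn: "connected V E" using tr by (simp add: tree_def)
lemma acyc: "acyclic_graph V E" using tr by (simp add: tree_def)
lemma finV: "finite V" using gV by (simp add: graph_def)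

lemma ad_sym: "{u,v} \<in> E \<Longrightarrow> {v,u} \<in> E" by (simp add: insert_commute)
lemma ad_ne: "{u,v} \<in> E \<Longrightarrow> u \<noteq> v"
proof
  assume "{u,v} \<in> E" "u = v"
  then have "{u} \<in> E" by simp
  then have "card {u} = 2" using gV unfolding graph_def by blast
  then show False by simp
qed
lemma ad_V: "{u,v} \<in> E \<Longrightarrow> u \<in> V \<and> v \<in> V" using gV unfolding graph_def by blast

lemma walk1: "walk V E [x] \<longleftrightarrow> x \<in> V" by (simp add: walk_def)

lemma walkC: "walk V E (x # y # xs) \<longleftrightarrow> x \<in> V \<and> {x,y} \<in> E \<and> walk V E (y # xs)"
proof
  assume w: "walk V E (x # y # xs)"
  have e0: "{x,y} \<in> E" using w unfolding walk_def by (metis length_Cons nth_Cons_0 nth_Cons_Suc zero_less_Suc Suc_less_eq)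
  have "\<forall>i. Suc i < length (y # xs) \<longrightarrow> {(y # xs) ! i, (y # xs) ! Suc i} \<in> E"
  proof (intro allI impI)
    fix i assume "Suc i < length (y # xs)"
    then have "Suc (Suc i) < length (x # y # xs)" by simp
    then have "{(x # y # xs) ! Suc i, (x # y # xs) ! Suc (Suc i)} \<in> E" using w unfolding walk_def by blast
    then show "{(y # xs) ! i, (y # xs) ! Suc i} \<in> E" by simp
  qed
  then show "x \<in> V \<and> {x,y} \<in> E \<and> walk V E (y # xs)" using w e0 unfolding walk_def by auto
next
  assume h: "x \<in> V \<and> {x,y} \<in> E \<and> walk V E (y # xs)"
  have "\<forall>i. Suc i < length (x # y # xs) \<longrightarrow> {(x # y # xs) ! i, (x # y # xs) ! Suc i} \<in> E"
  proof (intro allI impI)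
    fix i assume i: "Suc i < length (x # y # xs)"
    show "{(x # y # xs) ! i, (x # y # xs) ! Suc i} \<in> E"
    proof (cases i)
      case 0 then show ?thesis using h by simp
    next
      case (Suc j)
      then have "Suc j < length (y # xs)" using i by simp
      then have "{(y # xs) ! j, (y # xs) ! Suc j} \<in> E" using h unfolding walk_def by blast
      then show ?thesis using Suc by simp
    qed
  qed
  then show "walk V E (x # y # xs)" using h unfolding walk_def by auto
qed

lemma nocyc: "distinct xs \<Longrightarrow> 3 \<le> length xs \<Longrightarrow> walk V E xs \<Longrightarrow> {last xs, hd xs} \<in> E \<Longrightarrow> False"
  using acyc unfolding acyclic_graph_def is_cycle_def by blast

lemma c3: "distinct [a,b,c] \<Longrightarrow> {a,b} \<in> E \<Longrightarrow> {b,c} \<in> E \<Longrightarrow> {c,a} \<in> E \<Longrightarrow> False"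
  using nocyc[of "[a,b,c]"] by (simp add: walkC walk1 ad_V)
lemma c4: "distinct [a,b,c,d] \<Longrightarrow> {a,b} \<in> E \<Longrightarrow> {b,c} \<in> E \<Longrightarrow> {c,d} \<in> E \<Longrightarrow> {d,a} \<in> E \<Longrightarrow> False"
  using nocyc[of "[a,b,c,d]"] by (simp add: walkC walk1 ad_V)
lemma c5: "distinct [a,b,c,d,e] \<Longrightarrow> {a,b} \<in> E \<Longrightarrow> {b,c} \<in> E \<Longrightarrow> {c,d} \<in> E \<Longrightarrow> {d,e} \<in> E \<Longrightarrow> {e,a} \<in> E \<Longrightarrow> False"
  using nocyc[of "[a,b,c,d,e]"] by (simp add: walkC walk1 ad_V)
lemma c6: "distinct [a,b,c,d,e,f] \<Longrightarrow> {a,b} \<in> E \<Longrightarrow> {b,c} \<in> E \<Longrightarrow> {c,d} \<in> E \<Longrightarrow> {d,e} \<in> E \<Longrightarrow> {e,f} \<in> E \<Longrightarrow> {f,a} \<in> E \<Longrightarrow> False"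
  using nocyc[of "[a,b,c,d,e,f]"] by (simp add: walkC walk1 ad_V)
lemma c7: "distinct [a,b,c,d,e,f,g] \<Longrightarrow> {a,b} \<in> E \<Longrightarrow> {b,c} \<in> E \<Longrightarrow> {c,d} \<in> E \<Longrightarrow> {d,e} \<in> E \<Longrightarrow> {e,f} \<in> E \<Longrightarrow> {f,g} \<in> E \<Longrightarrow> {g,a} \<in> E \<Longrightarrow> False"
  using nocyc[of "[a,b,c,d,e,f,g]"] by (simp add: walkC walk1 ad_V)

lemma gdist_walk: "u \<in> V \<Longrightarrow> v \<in> V \<Longrightarrow> \<exists>xs. walk V E xs \<and> hd xs = u \<and> last xs = v \<and> length xs = Suc (gdist V E u v)"
proof -
  assume u: "u \<in> V" and v: "v \<in> V"
  obtain xs where w: "walk V E xs" "hd xs = u" "last xs = v" using conn u v unfolding connected_def by blast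
  have "xs \<noteq> []" using w unfolding walk_def by blast
  then obtain m where "length xs = Suc m" by (cases xs) auto
  then have ex: "\<exists>m xs. walk V E xs \<and> hd xs = u \<and> last xs = v \<and> length xs = Suc m" using w by blast
  show ?thesis unfolding gdist_def by (rule LeastI_ex[OF ex])
qed

lemma gdist_le: "walk V E xs \<Longrightarrow> hd xs = u \<Longrightarrow> last xs = v \<Longrightarrow> length xs = Suc m \<Longrightarrow> gdist V E u v \<le> m"
  unfolding gdist_def by (rule Least_le) blast

lemma near3:
  assumes u: "u \<in> V" and v: "v \<in> V" and d: "gdist V E u v \<le> 3"
  shows "u = v \<or> {u,v} \<in> E \<or> (\<exists>p. {u,p} \<in> E \<and> {p,v} \<in> E) \<or> (\<exists>p q. {u,p} \<in> E \<and> {p,q} \<in> E \<and> {q,v} \<in> E)"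
proof -
  obtain xs where w: "walk V E xs" "hd xs = u" "last xs = v" "length xs = Suc (gdist V E u v)"
    using gdist_walk[OF u v] by blast
  consider "length xs = 1" | "length xs = 2" | "length xs = 3" | "length xs = 4" using w(4) d by linarith
  then show ?thesis
  proof cases
    case 1
    then obtain x0 where "xs = [x0]" by (auto simp: length_Suc_conv)
    then show ?thesis using w by simp
  next
    case 2
    then obtain x0 x1 where "xs = [x0,x1]" by (auto simp: length_Suc_conv numeral_2_eq_2)
    then show ?thesis using w by (simp add: walkC)
  next
    case 3
    then obtain x0 x1 x2 where "xs = [x0,x1,x2]" by (auto simp: length_Suc_conv numeral_3_eq_3)
    then show ?thesis using w by (auto simp: walkC)
  next
    case 4
    then obtain x0 x1 x2 x3 where "xs = [x0,x1,x2,x3]" by (auto simp: length_Suc_conv eval_nat_numeral)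
    then show ?thesis using w by (auto simp: walkC)
  qed
qed

lemma far3:
  assumes u: "u \<in> V" and v: "v \<in> V" and d: "gdist V E u v = 3"
  shows "u \<noteq> v" "{u,v} \<notin> E" "\<And>p. {u,p} \<in> E \<Longrightarrow> {p,v} \<notin> E"
    "\<exists>p q. {u,p} \<in> E \<and> {p,q} \<in> E \<and> {q,v} \<in> E"
proof -
  show "u \<noteq> v"
  proof
    assume "u = v"
    then have "gdist V E u v \<le> 0" using gdist_le[of "[u]" u v 0] u by (simp add: walk1)
    then show False using d by simp
  qed
  show "{u,v} \<notin> E"
  proof
    assume e: "{u,v} \<in> E"
    then have "gdist V E u v \<le> 1" using gdist_le[of "[u,v]" u v 1] u v by (simp add: walkC walk1)
    then show False using d by simp
  qed
  show "{p,v} \<notin> E" if up: "{u,p} \<in> E" for p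
  proof
    assume pv: "{p,v} \<in> E"
    have "p \<in> V" using ad_V[OF up] by blast
    then have "gdist V E u v \<le> 2" using gdist_le[of "[u,p,v]" u v 2] u v up pv by (simp add: walkC walk1)
    then show False using d by simp
  qed
  have "u = v \<or> {u,v} \<in> E \<or> (\<exists>p. {u,p} \<in> E \<and> {p,v} \<in> E) \<or> (\<exists>p q. {u,p} \<in> E \<and> {p,q} \<in> E \<and> {q,v} \<in> E)"
    using near3[OF u v] d by simp
  then show "\<exists>p q. {u,p} \<in> E \<and> {p,q} \<in> E \<and> {q,v} \<in> E"
    using \<open>u \<noteq> v\<close> \<open>{u,v} \<notin> E\<close> \<open>\<And>p. {u,p} \<in> E \<Longrightarrow> {p,v} \<notin> E\<close> by blast
qed

lemma diam_facts:
  assumes d: "diameter V E = 3"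
  shows "\<And>u v. u \<in> V \<Longrightarrow> v \<in> V \<Longrightarrow> gdist V E u v \<le> 3" "\<exists>u\<in>V. \<exists>v\<in>V. gdist V E u v = 3"
proof -
  let ?D = "{gdist V E u v | u v. u \<in> V \<and> v \<in> V}"
  have eq: "?D = (\<lambda>(u,v). gdist V E u v) ` (V \<times> V)" by auto
  have fin: "finite ?D" unfolding eq using finV by simp
  have ne: "V \<noteq> {}" using conn unfolding connected_def by blast
  then have ne': "?D \<noteq> {}" by blast
  show "gdist V E u v \<le> 3" if "u \<in> V" "v \<in> V" for u v
  proof -
    have "gdist V E u v \<in> ?D" using that by blast
    then have "gdist V E u v \<le> Max ?D" using fin by simp
    then show ?thesis using d unfolding diameter_def by simp
  qed
  have "Max ?D \<in> ?D" using Max_in[OF fin ne'] .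
  then show "\<exists>u\<in>V. \<exists>v\<in>V. gdist V E u v = 3" using d unfolding diameter_def by auto
qed

end

context tr begin

lemma leafG1:
  assumes xa: "{x,a} \<in> E" and ab: "{a,b} \<in> E" and bv: "{b,v} \<in> E" and xv: "x \<noteq> v"
    and nxv: "{x,v} \<notin> E" and nc: "\<And>p. {x,p} \<in> E \<Longrightarrow> {p,v} \<notin> E"
    and d3: "\<And>s t. s \<in> V \<Longrightarrow> t \<in> V \<Longrightarrow> gdist V E s t \<le> 3"
    and xy: "{x,y} \<in> E"
  shows "y = a"
proof (rule ccontr)
  assume ya: "y \<noteq> a"
  have xa': "x \<noteq> a" using ad_ne[OF xa] .
  have ab': "a \<noteq> b" using ad_ne[OF ab] .
  have bv': "b \<noteq> v" using ad_ne[OF bv] .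
  have xb: "x \<noteq> b" using nxv bv by blast
  have av: "a \<noteq> v" using nxv xa by blast
  have nav: "{a,v} \<notin> E" using nc[OF xa] .
  have nxb: "{x,b} \<notin> E" using nc bv by blast
  have yx: "y \<noteq> x" using ad_ne[OF xy] by simp
  have yb: "y \<noteq> b" using nxb xy by blast
  have yv: "y \<noteq> v" using nxv xy by blast
  have nyv: "{y,v} \<notin> E" using nc[OF xy] .
  have yV: "y \<in> V" and vV: "v \<in> V" using ad_V[OF xy] ad_V[OF bv] by auto
  have ax: "{a,x} \<in> E" "{b,a} \<in> E" "{v,b} \<in> E" "{y,x} \<in> E" using xa ab bv xy by (simp_all add: insert_commute)
  consider "y = v" | "{y,v} \<in> E" | p where "{y,p} \<in> E" "{p,v} \<in> E" | p q where "{y,p} \<in> E" "{p,q} \<in> E" "{q,v} \<in> E"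
    using near3[OF yV vV d3[OF yV vV]] by blast
  then show False
  proof cases
    case 1 then show False using yv by simp
  next
    case 2 then show False using nyv by simp
  next
    case (3 p)
    have py: "p \<noteq> y" "p \<noteq> v" using ad_ne[OF 3(1)] ad_ne[OF 3(2)] by auto
    have pa: "p \<noteq> a" using nav 3(2) by blast
    have px: "p \<noteq> x" using nxv 3(2) by blast
    show False
    proof (cases "p = b")
      case True
      then have "{b,y} \<in> E" using 3(1) by (simp add: insert_commute)
      then show False using c4[of x a b y] xa ab ax xa' xb yx ab' ya yb by auto
    next
      case False
      have "{v,p} \<in> E" "{p,y} \<in> E" using 3 by (simp_all add: insert_commute)
      then show False using c6[of x a b v p y] xa ab bv ax xa' xb xv yx ab' av ya bv' yb yv py pa px False by auto
    qed
  next
    case (4 p q)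
    have qv: "q \<noteq> v" using ad_ne[OF 4(3)] .
    have qa: "q \<noteq> a" using nav 4(3) by blast
    have qx: "q \<noteq> x" using nxv 4(3) by blast
    have qy: "q \<noteq> y" using nyv 4(3) by blast
    have py: "p \<noteq> y" using ad_ne[OF 4(1)] by simp
    have pq: "p \<noteq> q" using ad_ne[OF 4(2)] .
    show False
    proof (cases "q = b")
      case qb: True
      have pb: "{p,b} \<in> E" using 4(2) qb by simp
      have pv: "p \<noteq> v" using nyv 4(1) by blast
      have pxb: "p \<noteq> x" using nxb pb by blast
      show False
      proof (cases "p = a")
        case True
        then have "{a,y} \<in> E" using 4(1) by (simp add: insert_commute)
        then show False using c3[of x a y] xa ax xa' yx ya by auto
      next
        case False
        have "{b,p} \<in> E" "{p,y} \<in> E" using pb 4(1) by (simp_all add: insert_commute)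
        then show False using c5[of x a b p y] xa ab ax xa' xb yx ab' ya yb False pxb py pq qb by auto
      qed
    next
      case qb: False
      show False
      proof (cases "p = x")
        case True then show False using nc 4 by blast
      next
        case px: False
        show False
        proof (cases "p = a")
          case True
          have "{v,q} \<in> E" "{q,a} \<in> E" using 4(2,3) True by (simp_all add: insert_commute)
          then show False using c4[of a b v q] ab bv ab' av bv' qa qb qv by auto
        next
          case pa: False
          show False
          proof (cases "p = b")
            case True
            then have "{b,y} \<in> E" using 4(1) by (simp add: insert_commute)
            then show False using c4[of x a b y] xa ab ax xa' xb yx ab' ya yb by auto
          next
            case pb: False
            have pv: "p \<noteq> v" using nyv 4(1) by blast
            have "{v,q} \<in> E" "{q,p} \<in> E" "{p,y} \<in> E" using 4 by (simp_all add: insert_commute)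
            then show False
              using c7[of x a b v q p y] xa ab bv ax xa' xb xv yx ab' av ya bv' yb yv
                qv qa qx qy qb py pq px pa pb pv by auto
          qed
        qed
      qed
    qed
  qed
qed

lemma leafA:
  assumes ab: "{a,b} \<in> E" and bv: "{b,v} \<in> E" and nav: "{a,v} \<notin> E" and av: "a \<noteq> v"
    and d3: "\<And>s t. s \<in> V \<Longrightarrow> t \<in> V \<Longrightarrow> gdist V E s t \<le> 3"
    and xa: "{x,a} \<in> E" and xb: "x \<noteq> b" and xy: "{x,y} \<in> E"
  shows "y = a"
proof -
  have xa': "x \<noteq> a" using ad_ne[OF xa] .
  have ab': "a \<noteq> b" using ad_ne[OF ab] .
  have bv': "b \<noteq> v" using ad_ne[OF bv] .
  have xv: "x \<noteq> v" using xa nav by (auto simp: insert_commute)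
  have nxv: "{x,v} \<notin> E"
  proof
    assume "{x,v} \<in> E"
    then have "{v,x} \<in> E" by (simp add: insert_commute)
    then show False using c4[of x a b v] xa ab bv xa' xb xv ab' av bv' by auto
  qed
  have nc: "{p,v} \<notin> E" if xp: "{x,p} \<in> E" for p
  proof
    assume pv: "{p,v} \<in> E"
    have p1: "p \<noteq> x" "p \<noteq> v" using ad_ne[OF xp] ad_ne[OF pv] by auto
    have p2: "p \<noteq> a" using nav pv by blast
    show False
    proof (cases "p = b")
      case True
      then have "{b,x} \<in> E" using xp by (simp add: insert_commute)
      then show False using c3[of x a b] xa ab xa' xb ab' by auto
    next
      case False
      have "{v,p} \<in> E" "{p,x} \<in> E" using pv xp by (simp_all add: insert_commute)
      then show False using c5[of x a b v p] xa ab bv xa' xb xv ab' av bv' p1 p2 False by auto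
    qed
  qed
  show ?thesis by (rule leafG1[OF xa ab bv xv nxv nc d3 xy])
qed

end

context tr begin

lemma struct3:
  assumes d: "diameter V E = 3"
  obtains u a b v where "{u,a} \<in> E" "{a,b} \<in> E" "{b,v} \<in> E" "u \<noteq> b" "v \<noteq> a"
    "\<And>x y. {x,a} \<in> E \<Longrightarrow> x \<noteq> b \<Longrightarrow> {x,y} \<in> E \<Longrightarrow> y = a"
    "\<And>x y. {x,b} \<in> E \<Longrightarrow> x \<noteq> a \<Longrightarrow> {x,y} \<in> E \<Longrightarrow> y = b"
    "\<And>x. x \<in> V \<Longrightarrow> x = a \<or> x = b \<or> {x,a} \<in> E \<or> {x,b} \<in> E"
proof -
  have d3: "\<And>s t. s \<in> V \<Longrightarrow> t \<in> V \<Longrightarrow> gdist V E s t \<le> 3" using diam_facts(1)[OF d] .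
  obtain u v where u: "u \<in> V" and v: "v \<in> V" and uv: "gdist V E u v = 3" using diam_facts(2)[OF d] by blast
  obtain a b where ua: "{u,a} \<in> E" and ab: "{a,b} \<in> E" and bv: "{b,v} \<in> E" using far3(4)[OF u v uv] by blast
  have nav: "{a,v} \<notin> E" using far3(3)[OF u v uv ua] .
  have nub: "{u,b} \<notin> E" using far3(3)[OF u v uv] bv by blast
  have nuv: "{u,v} \<notin> E" using far3(2)[OF u v uv] .
  have av: "a \<noteq> v" using ua nuv by blast
  have bu: "b \<noteq> u" using bv nuv by blast
  have ba: "{b,a} \<in> E" and au: "{a,u} \<in> E" using ab ua by (simp_all add: insert_commute)
  have nbu: "{b,u} \<notin> E" using nub by (simp add: insert_commute)
  have LA: "y = a" if "{x,a} \<in> E" "x \<noteq> b" "{x,y} \<in> E" for x y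
    using leafA[OF ab bv nav av d3 that] .
  have LB: "y = b" if "{x,b} \<in> E" "x \<noteq> a" "{x,y} \<in> E" for x y
    using leafA[OF ba au nbu bu d3 that] .
  have aV: "a \<in> V" using ad_V[OF ab] by blast
  have G3: "x = a \<or> x = b \<or> {x,a} \<in> E \<or> {x,b} \<in> E" if xV: "x \<in> V" for x
  proof -
    consider "x = a" | "{x,a} \<in> E" | w where "{x,w} \<in> E" "{w,a} \<in> E"
      | w1 w2 where "{x,w1} \<in> E" "{w1,w2} \<in> E" "{w2,a} \<in> E"
      using near3[OF xV aV d3[OF xV aV]] by blast
    then show ?thesis
    proof cases
      case 1 then show ?thesis by simp
    next
      case 2 then show ?thesis by simp
    next
      case (3 w)
      show ?thesis
      proof (cases "w = b")
        case True then show ?thesis using 3 by simp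
      next
        case False
        have "{w,x} \<in> E" using 3(1) by (simp add: insert_commute)
        then have "x = a" using LA[OF 3(2) False] by blast
        then show ?thesis by simp
      qed
    next
      case (4 w1 w2)
      show ?thesis
      proof (cases "w2 = b")
        case True
        have w1b: "{w1,b} \<in> E" using 4(2) True by simp
        show ?thesis
        proof (cases "w1 = a")
          case True then show ?thesis using 4(1) by simp
        next
          case False
          have "{w1,x} \<in> E" using 4(1) by (simp add: insert_commute)
          then have "x = b" using LB[OF w1b False] by blast
          then show ?thesis by simp
        qed
      next
        case False
        have "{w2,w1} \<in> E" using 4(2) by (simp add: insert_commute)
        then have "w1 = a" using LA[OF 4(3) False] by blast
        then show ?thesis using 4(1) by simp
      qed
    qed
  qed
  show ?thesis using that[OF ua ab bv bu[symmetric] av[symmetric] LA LB G3] .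
qed

lemma tree_main:
  assumes d: "diameter V E = 3"
  shows "(\<exists>c a b. c \<in> V \<and> a \<in> V \<and> b \<in> V \<and> c \<noteq> a \<and> c \<noteq> b \<and> a \<noteq> b \<and> {a,b} \<in> E \<and> {a,c} \<in> E \<and>
      (\<forall>y\<in>V. {c,y} \<in> E \<longrightarrow> y = a) \<and> (\<forall>y\<in>V. {a,y} \<in> E \<longrightarrow> y = b \<or> y = c) \<and>
      (\<forall>y\<in>V. y = a \<or> y = b \<or> y = c \<or> {b,y} \<in> E))
    \<or> (6 \<le> card V \<and> (card V = 6 \<longrightarrow> graph_iso V E S22_V S22_E))"
proof -
  obtain u a b v where ua: "{u,a} \<in> E" and ab: "{a,b} \<in> E" and bv: "{b,v} \<in> E"
    and ub: "u \<noteq> b" and va: "v \<noteq> a" and LA: "\<And>x y. {x,a} \<in> E \<Longrightarrow> x \<noteq> b \<Longrightarrow> {x,y} \<in> E \<Longrightarrow> y = a"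
    and LB: "\<And>x y. {x,b} \<in> E \<Longrightarrow> x \<noteq> a \<Longrightarrow> {x,y} \<in> E \<Longrightarrow> y = b"
    and G3: "\<And>x. x \<in> V \<Longrightarrow> x = a \<or> x = b \<or> {x,a} \<in> E \<or> {x,b} \<in> E"
    using struct3[OF d] by blast
  have ab': "a \<noteq> b" using ad_ne[OF ab] .
  have aV: "a \<in> V" and bV: "b \<in> V" using ad_V[OF ab] by auto
  have cfg: "\<exists>c a b. c \<in> V \<and> a \<in> V \<and> b \<in> V \<and> c \<noteq> a \<and> c \<noteq> b \<and> a \<noteq> b \<and> {a,b} \<in> E \<and> {a,c} \<in> E \<and>
      (\<forall>y\<in>V. {c,y} \<in> E \<longrightarrow> y = a) \<and> (\<forall>y\<in>V. {a,y} \<in> E \<longrightarrow> y = b \<or> y = c) \<and>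
      (\<forall>y\<in>V. y = a \<or> y = b \<or> y = c \<or> {b,y} \<in> E)"
    if ab0: "{a0,b0} \<in> E" and uu: "{u0,a0} \<in> E"
      and L0: "\<And>x y. {x,a0} \<in> E \<Longrightarrow> x \<noteq> b0 \<Longrightarrow> {x,y} \<in> E \<Longrightarrow> y = a0"
      and G0: "\<And>x. x \<in> V \<Longrightarrow> x = a0 \<or> x = b0 \<or> {x,a0} \<in> E \<or> {x,b0} \<in> E"
      and uniq: "\<And>x. {x,a0} \<in> E \<Longrightarrow> x \<noteq> b0 \<Longrightarrow> x = u0"
      and u0b0: "u0 \<noteq> b0"
    for a0 b0 u0
  proof -
    have a0b0: "a0 \<noteq> b0" using ad_ne[OF ab0] .
    have u0a0: "u0 \<noteq> a0" using ad_ne[OF uu] .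
    have V0: "u0 \<in> V" "a0 \<in> V" "b0 \<in> V" using ad_V[OF uu] ad_V[OF ab0] by auto
    have a0u0: "{a0,u0} \<in> E" using uu by (simp add: insert_commute)
    have s1: "\<forall>y\<in>V. {u0,y} \<in> E \<longrightarrow> y = a0" using L0[OF uu u0b0] by blast
    have s2: "\<forall>y\<in>V. {a0,y} \<in> E \<longrightarrow> y = b0 \<or> y = u0"
    proof (intro ballI impI)
      fix y assume "{a0,y} \<in> E"
      then have "{y,a0} \<in> E" by (simp add: insert_commute)
      then show "y = b0 \<or> y = u0" using uniq by blast
    qed
    have s3: "\<forall>y\<in>V. y = a0 \<or> y = b0 \<or> y = u0 \<or> {b0,y} \<in> E"
    proof
      fix y assume y: "y \<in> V"
      have "{y,b0} \<in> E \<Longrightarrow> {b0,y} \<in> E" by (simp add: insert_commute)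
      then show "y = a0 \<or> y = b0 \<or> y = u0 \<or> {b0,y} \<in> E" using G0[OF y] uniq by blast
    qed
    show ?thesis using V0 u0a0 u0b0 a0b0 ab0 a0u0 s1 s2 s3 by blast
  qed
  show ?thesis
  proof (cases "\<forall>x. {x,a} \<in> E \<longrightarrow> x \<noteq> b \<longrightarrow> x = u")
    case True
    have "\<exists>c a b. c \<in> V \<and> a \<in> V \<and> b \<in> V \<and> c \<noteq> a \<and> c \<noteq> b \<and> a \<noteq> b \<and> {a,b} \<in> E \<and> {a,c} \<in> E \<and>
      (\<forall>y\<in>V. {c,y} \<in> E \<longrightarrow> y = a) \<and> (\<forall>y\<in>V. {a,y} \<in> E \<longrightarrow> y = b \<or> y = c) \<and>
      (\<forall>y\<in>V. y = a \<or> y = b \<or> y = c \<or> {b,y} \<in> E)"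
    proof -
      have uq: "\<And>x. {x,a} \<in> E \<Longrightarrow> x \<noteq> b \<Longrightarrow> x = u" using True by blast
      show ?thesis by (rule cfg[OF ab ua LA G3 uq ub])
    qed
    then show ?thesis by blast
  next
    case nA: False
    then obtain u' where u'a: "{u',a} \<in> E" and u'b: "u' \<noteq> b" and u'u: "u' \<noteq> u" by blast
    show ?thesis
    proof (cases "\<forall>x. {x,b} \<in> E \<longrightarrow> x \<noteq> a \<longrightarrow> x = v")
      case True
      have ba: "{b,a} \<in> E" and vb: "{v,b} \<in> E" using ab bv by (simp_all add: insert_commute)
      have G3': "\<And>x. x \<in> V \<Longrightarrow> x = b \<or> x = a \<or> {x,b} \<in> E \<or> {x,a} \<in> E" using G3 by blast
      have "\<exists>c a b. c \<in> V \<and> a \<in> V \<and> b \<in> V \<and> c \<noteq> a \<and> c \<noteq> b \<and> a \<noteq> b \<and> {a,b} \<in> E \<and> {a,c} \<in> E \<and>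
        (\<forall>y\<in>V. {c,y} \<in> E \<longrightarrow> y = a) \<and> (\<forall>y\<in>V. {a,y} \<in> E \<longrightarrow> y = b \<or> y = c) \<and>
        (\<forall>y\<in>V. y = a \<or> y = b \<or> y = c \<or> {b,y} \<in> E)"
      proof -
        have uq: "\<And>x. {x,b} \<in> E \<Longrightarrow> x \<noteq> a \<Longrightarrow> x = v" using True by blast
        show ?thesis by (rule cfg[OF ba vb LB G3' uq va])
      qed
      then show ?thesis by blast
    next
      case False
      then obtain v' where v'b: "{v',b} \<in> E" and v'a: "v' \<noteq> a" and v'v: "v' \<noteq> v" by blast
      have vb: "{v,b} \<in> E" using bv by (simp add: insert_commute)
      have Nu: "{u,y} \<in> E \<longleftrightarrow> y = a" for y using LA[OF ua ub] ua by blast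
      have Nu': "{u',y} \<in> E \<longleftrightarrow> y = a" for y using LA[OF u'a u'b] u'a by blast
      have Nv: "{v,y} \<in> E \<longleftrightarrow> y = b" for y using LB[OF vb va] vb by blast
      have Nv': "{v',y} \<in> E \<longleftrightarrow> y = b" for y using LB[OF v'b v'a] v'b by blast
      have ua': "u \<noteq> a" using ad_ne[OF ua] .
      have u'a': "u' \<noteq> a" using ad_ne[OF u'a] .
      have vb': "v \<noteq> b" using ad_ne[OF vb] .
      have v'b': "v' \<noteq> b" using ad_ne[OF v'b] .
      have uv: "u \<noteq> v" using Nu Nv ab' by blast
      have uv': "u \<noteq> v'" using Nu Nv' ab' by blast
      have u'v: "u' \<noteq> v" using Nu' Nv ab' by blast
      have u'v': "u' \<noteq> v'" using Nu' Nv' ab' by blast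
      have inV: "u \<in> V" "u' \<in> V" "v \<in> V" "v' \<in> V" using ad_V[OF ua] ad_V[OF u'a] ad_V[OF vb] ad_V[OF v'b] by auto
      let ?S = "{a,b,u,u',v,v'}"
      have Ssub: "?S \<subseteq> V" using inV aV bV by blast
      have cS: "card ?S = 6"
        using ab' ua' u'a' va v'a ub u'b vb' v'b' u'u uv uv' u'v u'v' v'v
        by simp
      have c6: "6 \<le> card V" using card_mono[OF finV Ssub] cS by simp
      have iso: "graph_iso V E S22_V S22_E" if cV: "card V = 6"
      proof -
        have VS: "V = ?S" using card_subset_eq[OF finV Ssub] cS cV by simp
        define f where "f y = (if y = a then 0 else if y = b then 1 else if y = u then 2
          else if y = u' then 3 else if y = v then 4 else (5::nat))" for y
        have fv: "f a = 0" "f b = 1" "f u = 2" "f u' = 3" "f v = 4" "f v' = 5"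
          unfolding f_def using ab' ua' u'a' va v'a ub u'b vb' v'b' u'u uv uv' u'v u'v' v'v
          by (simp_all add: ab'[symmetric] ua'[symmetric] u'a'[symmetric] va[symmetric] v'a[symmetric] ub[symmetric] u'b[symmetric] vb'[symmetric] v'b'[symmetric] u'u[symmetric] uv[symmetric] uv'[symmetric] u'v[symmetric] u'v'[symmetric] v'v[symmetric])
        have Nu2: "{y,u} \<in> E \<longleftrightarrow> y = a" for y using Nu[of y] by (simp add: insert_commute)
        have Nu2': "{y,u'} \<in> E \<longleftrightarrow> y = a" for y using Nu'[of y] by (simp add: insert_commute)
        have Nv2: "{y,v} \<in> E \<longleftrightarrow> y = b" for y using Nv[of y] by (simp add: insert_commute)
        have Nv2': "{y,v'} \<in> E \<longleftrightarrow> y = b" for y using Nv'[of y] by (simp add: insert_commute)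
        have naa: "{a,a} \<notin> E" "{b,b} \<notin> E" using ad_ne by blast+
        have ba: "{b,a} \<in> E" using ab by (simp add: insert_commute)
        have Na: "{a,y} \<in> E \<longleftrightarrow> y = b \<or> y = u \<or> y = u'" if "y \<in> V" for y
        proof -
          have "y \<in> ?S" using that VS by simp
          then show ?thesis using Nu2 Nu2' Nv2 Nv2' ab naa ab' va v'a ua' u'a' by auto
        qed
        have Nb: "{b,y} \<in> E \<longleftrightarrow> y = a \<or> y = v \<or> y = v'" if "y \<in> V" for y
        proof -
          have "y \<in> ?S" using that VS by simp
          then show ?thesis using Nu2 Nu2' Nv2 Nv2' ba naa ab' ub u'b vb' v'b' by auto
        qed
        have bij: "bij_betw f V S22_V"
          unfolding bij_betw_def inj_on_def VS S22_V_def
          using fv ab' ua' u'a' va v'a ub u'b vb' v'b' u'u uv uv' u'v u'v' v'v by auto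
        have ed: "\<forall>p\<in>V. \<forall>q\<in>V. ({p,q} \<in> E) = ({f p, f q} \<in> S22_E)"
        proof (intro ballI)
          fix p q assume p: "p \<in> V" and q: "q \<in> V"
          have pS: "p \<in> ?S" and qS: "q \<in> ?S" using p q VS by auto
          have Na': "{y,a} \<in> E \<longleftrightarrow> y = b \<or> y = u \<or> y = u'" if "y \<in> V" for y
            using Na[OF that] by (simp add: insert_commute)
          have Nb': "{y,b} \<in> E \<longleftrightarrow> y = a \<or> y = v \<or> y = v'" if "y \<in> V" for y
            using Nb[OF that] by (simp add: insert_commute)
          have Na': "{y,a} \<in> E \<longleftrightarrow> y = b \<or> y = u \<or> y = u'" if "y \<in> V" for y
            using Na[OF that] by (simp add: insert_commute)
          have Nb': "{y,b} \<in> E \<longleftrightarrow> y = a \<or> y = v \<or> y = v'" if "y \<in> V" for y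
            using Nb[OF that] by (simp add: insert_commute)
          note dist = ab' ua' u'a' va v'a ub u'b vb' v'b' u'u uv uv' u'v u'v' v'v
            ab'[symmetric] ua'[symmetric] u'a'[symmetric] va[symmetric] v'a[symmetric] ub[symmetric] u'b[symmetric]
            vb'[symmetric] v'b'[symmetric] u'u[symmetric] uv[symmetric] uv'[symmetric] u'v[symmetric] u'v'[symmetric] v'v[symmetric]
          have sing: "{y} \<notin> E" for y using ad_ne[of y y] by auto
          show "({p,q} \<in> E) = ({f p, f q} \<in> S22_E)"
            using pS qS
            apply (simp only: insert_iff empty_iff)
            apply (elim disjE)
            apply (simp_all add: fv Na Nb Na' Nb' Nu Nu' Nv Nv' Nu2 Nu2' Nv2 Nv2' aV bV inV naa sing dist S22_E_def doubleton_eq_iff)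
            done
        qed
        show ?thesis unfolding graph_iso_def using bij ed by blast
      qed
      show ?thesis using c6 iso by blast
    qed
  qed
qed

end

theorem proposition5p2:
  shows "is_IR_graph S22_V S22_E \<and>
    (\<forall>(V::'a set) E. tree V E \<and> diameter V E = 3 \<and> is_IR_graph V E \<longrightarrow>
        card V \<ge> 6 \<and> (card V = 6 \<longrightarrow> graph_iso V E S22_V S22_E))"
proof -
  have p2: "\<forall>(V::'a set) E. tree V E \<and> diameter V E = 3 \<and> is_IR_graph V E \<longrightarrow>
        card V \<ge> 6 \<and> (card V = 6 \<longrightarrow> graph_iso V E S22_V S22_E)"
  proof (intro allI impI)
  fix V :: "'a set" and E
  assume h: "tree V E \<and> diameter V E = 3 \<and> is_IR_graph V E"
  then have t: "tree V E" and d: "diameter V E = 3" and ir: "is_IR_graph V E" by auto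
  interpret tr V E using t by unfold_locales
  note tm = tree_main[OF d]
  show "card V \<ge> 6 \<and> (card V = 6 \<longrightarrow> graph_iso V E S22_V S22_E)"
  proof (cases "6 \<le> card V \<and> (card V = 6 \<longrightarrow> graph_iso V E S22_V S22_E)")
    case True then show ?thesis by simp
  next
    case False
    then obtain c a b where c: "c \<in> V" and a: "a \<in> V" and b: "b \<in> V" and ca: "c \<noteq> a" and cb: "c \<noteq> b"
      and ab: "a \<noteq> b" and eab: "{a,b} \<in> E" and eac: "{a,c} \<in> E"
      and Nc: "\<forall>y\<in>V. {c,y} \<in> E \<longrightarrow> y = a" and Na: "\<forall>y\<in>V. {a,y} \<in> E \<longrightarrow> y = b \<or> y = c"
      and Nb: "\<forall>y\<in>V. y = a \<or> y = b \<or> y = c \<or> {b,y} \<in> E"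
      using tm by blast
    obtain Wn :: "nat set" and Fn where gr: "graph Wn Fn" and iso: "graph_iso V E (IR_sets Wn Fn) (IR_edges Wn Fn)"
      using ir unfolding is_IR_graph_def by blast
    obtain g where bij: "bij_betw g V (IR_sets Wn Fn)"
      and eg: "\<forall>u\<in>V. \<forall>v\<in>V. ({u, v} \<in> E) = ({g u, g v} \<in> IR_edges Wn Fn)"
      using iso unfolding graph_iso_def by blast
    interpret G: irg Wn Fn using gr by unfold_locales
    have gV: "g ` V = IR_sets Wn Fn" using bij by (simp add: bij_betw_def)
    have ginj: "inj_on g V" using bij by (simp add: bij_betw_def)
    have gin: "g y \<in> IR_sets Wn Fn" if "y \<in> V" for y using gV that by blast
    have sweq: "G.sw (g p) (g q) \<longleftrightarrow> {p,q} \<in> E" if "p \<in> V" "q \<in> V" for p q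
      using G.IR_edges_sw[OF gin[OF that(1)] gin[OF that(2)]] eg that by blast
    have surj: "\<exists>y\<in>V. X = g y" if "X \<in> IR_sets Wn Fn" for X using that gV by blast
    have bc: "g b \<noteq> g c" using ginj b c cb inj_on_contraD by metis
    have sab: "G.sw (g a) (g b)" using sweq[OF a b] eab by blast
    have sac: "G.sw (g a) (g c)" using sweq[OF a c] eac by blast
    have H1: "X = g a" if X: "X \<in> IR_sets Wn Fn" and sw: "G.sw (g c) X" for X
    proof -
      obtain y where y: "y \<in> V" and Xy: "X = g y" using surj[OF X] by blast
      have "{c,y} \<in> E" using sweq[OF c y] Xy sw by blast
      then show "X = g a" using Nc y Xy by blast
    qed
    have H2: "X = g b \<or> X = g c" if X: "X \<in> IR_sets Wn Fn" and sw: "G.sw (g a) X" for X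
    proof -
      obtain y where y: "y \<in> V" and Xy: "X = g y" using surj[OF X] by blast
      have "{a,y} \<in> E" using sweq[OF a y] Xy sw by blast
      then have "y = b \<or> y = c" using Na y by blast
      then show "X = g b \<or> X = g c" using Xy by blast
    qed
    have H3: "X = g a \<or> X = g b \<or> X = g c \<or> G.sw (g b) X" if X: "X \<in> IR_sets Wn Fn" for X
    proof -
      obtain y where y: "y \<in> V" and Xy: "X = g y" using surj[OF X] by blast
      have "y = a \<or> y = b \<or> y = c \<or> {b,y} \<in> E" using Nb y by blast
      then show ?thesis using sweq[OF b y] unfolding Xy by auto
    qed
    have "False" by (rule no_config[OF gr gin[OF a] gin[OF b] gin[OF c] bc sab sac H1 H2 H3])
    then show ?thesis by blast
  qed
  qed
  show ?thesis using part1 p2 by blast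
qed

end
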